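(* In a generalised differential Seely category, let $g:X\times\mathcal U(A)\to\mathcal U(B)$ be a morphism of $\mathscr C$ such that $g=⦃(f,u)⦄;\pi_2$ for some morphism $(f,u):(X,A)\to(Y,B)$ of $LS(\mathscr C)$. Then $\mathrm D_2(g)=\pi_1^*(\mathrm{id}_X,u)$, where $\pi_1:X\times\mathcal U(A)\to X$.
   Context: Composition is diagrammatic; monoidal categories are strict. Setting: an LNL adjunction $\mathcal F\dashv\mathcal U$, $\mathcal F:\mathscr C\to\mathcal L$, between cartesian $(\mathscr C,\times,I)$ and symmetric monoidal $(\mathcal L,\otimes,1)$; $\mathcal U$ lax monoidal via $n_{A,B}:\mathcal U(A)\times\mathcal U(B)\to\mathcal U(A\otimes B)$; $\mathcal F$ strong monoidal via isomorphisms $m_{X,Y}$, $m_1$; unit $\eta$; $\mathbf c_X:=\mathcal F(\Delta_X);m_{X,X}^{-1}$, $\mathbf w_X:=\mathcal F(t_X);m_1^{-1}$. $LS(\mathscr C)$: objects $(X,A)$; morphisms $(f,u):(X,A)\to(Y,B)$ with $f:X\to Y$, $u:\mathcal F(X)\otimes A\to B$; composition $(f,u);(g,v)=(f;g,(\mathbf c_X\otimes\mathrm{id}_A);(\mathcal F(f)\otimes u);v)$; identity $(\mathrm{id}_X,\mathbf w_X\otimes\mathrm{id}_A)$; $\mathbf{ls}(f,u)=f$; fibre over $X$ = morphisms $(\mathrm{id}_X,u)$; reindexing along $h:X'\to X$: $h^*(X,B)=(X',B)$, $h^*(\mathrm{id}_X,v)=(\mathrm{id}_{X'},(\mathcal F(h)\otimes\mathrm{id}_B);v)$.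 With biproducts $\oplus$ in $\mathcal L$: fibrewise injections $\iota^X_i=(\mathrm{id}_X,\mathbf w_X\otimes\iota_i)$; products in $LS(\mathscr C)$: $(X\times Y,A\oplus B)$, projections $(\pi_i,\mathbf w_{X\times Y}\otimes\pi_i)$. GDSC: $\mathcal L$ additive (CMon-enriched, $\otimes$ bilinear) with finite products, and a functor $\mathcal T:\mathscr C\to LS(\mathscr C)$ with: (t.1) $\mathbf{ls}\circ\mathcal T=\mathrm{id}$, so $\mathcal T(X)=(X,\lambda(X))$, and $\varphi_{X,Y}:=\langle\mathcal T(\pi_1),\mathcal T(\pi_2)\rangle:\mathcal T(X\times Y)\to(X\times Y,\lambda(X)\oplus\lambda(Y))$ is an isomorphism; (t.2) $\mathcal T(\mathcal U(A))=(\mathcal U(A),A)$; (t.3) with $i^{X,Y}_2:=\iota^{X\times Y}_2;\varphi^{-1}_{X,Y}$, comprehension $⦃(f,u)⦄:=\langle\pi_1;f,(\eta_X\times\mathrm{id}_{\mathcal U(A)});n_{\mathcal F(X),A};\mathcal U(u)\rangle:X\times\mathcal U(A)\to Y\times\mathcal U(B)$, weakening $W(f,u):=(⦃(f,u)⦄,(\mathcal F(\pi_1)\otimes\mathrm{id}_A);u)$: $W(f,u);i^{Y,\mathcal U(B)}_2=i^{X,\mathcal U(A)}_2;\mathcal T(⦃(f,u)⦄)$. Differential: for $h:X\to Y$ with $\mathcal T(h)=(h,v)$, $\mathrm D(h):=(\mathrm{id}_X,v)$. Partial differential: for $h:X\times Y\to Z$, $\mathrm D_2(h):=i^{X,Y}_2;\mathrm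 D(h):(X\times Y,\lambda(Y))\to(X\times Y,\lambda(Z))$. *)

theory Defs
  imports Main
begin

section \<open>Categories (composition written diagrammatically: Cp C f g = f;g)\<close>

record ('o,'m) cat =
  Ob  :: "'o set"
  Ar  :: "'m set"
  Dm  :: "'m \<Rightarrow> 'o"
  Cd  :: "'m \<Rightarrow> 'o"
  idm :: "'o \<Rightarrow> 'm"
  Cp  :: "'m \<Rightarrow> 'm \<Rightarrow> 'm"

definition hom :: "('o,'m,'x) cat_scheme \<Rightarrow> 'o \<Rightarrow> 'o \<Rightarrow> 'm set" where
  "hom C X Y = {f \<in> Ar C. Dm C f = X \<and> Cd C f = Y}"

definition is_cat :: "('o,'m,'x) cat_scheme \<Rightarrow> bool" where
  "is_cat C \<longleftrightarrow>
     (\<forall>f \<in> Ar C. Dm C f \<in> Ob C \<and> Cd C f \<in> Ob C) \<and>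
     (\<forall>X \<in> Ob C. idm C X \<in> hom C X X) \<and>
     (\<forall>f \<in> Ar C. \<forall>g \<in> Ar C. Cd C f = Dm C g \<longrightarrow> Cp C f g \<in> hom C (Dm C f) (Cd C g)) \<and>
     (\<forall>f \<in> Ar C. Cp C (idm C (Dm C f)) f = f \<and> Cp C f (idm C (Cd C f)) = f) \<and>
     (\<forall>f \<in> Ar C. \<forall>g \<in> Ar C. \<forall>h \<in> Ar C. Cd C f = Dm C g \<longrightarrow> Cd C g = Dm C h \<longrightarrow>
        Cp C (Cp C f g) h = Cp C f (Cp C g h))"

definition is_functor :: "('a,'b,'x) cat_scheme \<Rightarrow> ('c,'d,'y) cat_scheme \<Rightarrow>
    ('a \<Rightarrow> 'c) \<Rightarrow> ('b \<Rightarrow> 'd) \<Rightarrow> bool" where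
  "is_functor C D Fo Fm \<longleftrightarrow>
     (\<forall>X \<in> Ob C. Fo X \<in> Ob D \<and> Fm (idm C X) = idm D (Fo X)) \<and>
     (\<forall>f \<in> Ar C. Fm f \<in> hom D (Fo (Dm C f)) (Fo (Cd C f))) \<and>
     (\<forall>f \<in> Ar C. \<forall>g \<in> Ar C. Cd C f = Dm C g \<longrightarrow> Fm (Cp C f g) = Cp D (Fm f) (Fm g))"

section \<open>Cartesian category (chosen products, terminal object; strict)\<close>

record ('o,'m) ccat = "('o,'m) cat" +
  prd   :: "'o \<Rightarrow> 'o \<Rightarrow> 'o"
  pi1   :: "'o \<Rightarrow> 'o \<Rightarrow> 'm"
  pi2   :: "'o \<Rightarrow> 'o \<Rightarrow> 'm"
  tpl   :: "'m \<Rightarrow> 'm \<Rightarrow> 'm"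
  trm   :: "'o"
  tbang :: "'o \<Rightarrow> 'm"

definition prdm :: "('o,'m,'x) ccat_scheme \<Rightarrow> 'm \<Rightarrow> 'm \<Rightarrow> 'm" where
  "prdm C f g = tpl C (Cp C (pi1 C (Dm C f) (Dm C g)) f) (Cp C (pi2 C (Dm C f) (Dm C g)) g)"

definition diag :: "('o,'m,'x) ccat_scheme \<Rightarrow> 'o \<Rightarrow> 'm" where
  "diag C X = tpl C (idm C X) (idm C X)"

definition swp :: "('o,'m,'x) ccat_scheme \<Rightarrow> 'o \<Rightarrow> 'o \<Rightarrow> 'm" where
  "swp C X Y = tpl C (pi2 C X Y) (pi1 C X Y)"

definition is_cart :: "('o,'m,'x) ccat_scheme \<Rightarrow> bool" where
  "is_cart C \<longleftrightarrow> is_cat C \<and>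
     trm C \<in> Ob C \<and>
     (\<forall>X \<in> Ob C. tbang C X \<in> hom C X (trm C) \<and> (\<forall>h \<in> hom C X (trm C). h = tbang C X)) \<and>
     (\<forall>X \<in> Ob C. \<forall>Y \<in> Ob C. prd C X Y \<in> Ob C \<and>
        pi1 C X Y \<in> hom C (prd C X Y) X \<and> pi2 C X Y \<in> hom C (prd C X Y) Y) \<and>
     (\<forall>Z \<in> Ob C. \<forall>X \<in> Ob C. \<forall>Y \<in> Ob C. \<forall>f \<in> hom C Z X. \<forall>g \<in> hom C Z Y.
        tpl C f g \<in> hom C Z (prd C X Y) \<and>
        Cp C (tpl C f g) (pi1 C X Y) = f \<and> Cp C (tpl C f g) (pi2 C X Y) = g) \<and>
     (\<forall>Z \<in> Ob C. \<forall>X \<in> Ob C. \<forall>Y \<in> Ob C. \<forall>h \<in> hom C Z (prd C X Y).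
        h = tpl C (Cp C h (pi1 C X Y)) (Cp C h (pi2 C X Y))) \<and>
     \<comment> \<open>strictness of the cartesian monoidal structure\<close>
     (\<forall>X \<in> Ob C. \<forall>Y \<in> Ob C. \<forall>Z \<in> Ob C.
        prd C (prd C X Y) Z = prd C X (prd C Y Z) \<and>
        tpl C (Cp C (pi1 C (prd C X Y) Z) (pi1 C X Y))
              (tpl C (Cp C (pi1 C (prd C X Y) Z) (pi2 C X Y)) (pi2 C (prd C X Y) Z))
          = idm C (prd C X (prd C Y Z))) \<and>
     (\<forall>X \<in> Ob C. prd C (trm C) X = X \<and> prd C X (trm C) = X \<and>
        pi2 C (trm C) X = idm C X \<and> pi1 C X (trm C) = idm C X)"

section \<open>Additive symmetric monoidal category with finite products (strict)\<close>

record ('o,'m) acat = "('o,'m) cat" +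
  tns   :: "'o \<Rightarrow> 'o \<Rightarrow> 'o"
  tnsm  :: "'m \<Rightarrow> 'm \<Rightarrow> 'm"
  tunit :: "'o"
  symm  :: "'o \<Rightarrow> 'o \<Rightarrow> 'm"
  zer   :: "'o \<Rightarrow> 'o \<Rightarrow> 'm"
  pls   :: "'m \<Rightarrow> 'm \<Rightarrow> 'm"
  bp    :: "'o \<Rightarrow> 'o \<Rightarrow> 'o"
  bq1   :: "'o \<Rightarrow> 'o \<Rightarrow> 'm"
  bq2   :: "'o \<Rightarrow> 'o \<Rightarrow> 'm"
  btpl  :: "'m \<Rightarrow> 'm \<Rightarrow> 'm"
  bterm :: "'o"
  bbang :: "'o \<Rightarrow> 'm"

definition is_addsmc :: "('o,'m,'x) acat_scheme \<Rightarrow> bool" where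
  "is_addsmc L \<longleftrightarrow> is_cat L \<and>
     \<comment> \<open>tensor bifunctor\<close>
     tunit L \<in> Ob L \<and>
     (\<forall>A \<in> Ob L. \<forall>B \<in> Ob L. tns L A B \<in> Ob L \<and> tnsm L (idm L A) (idm L B) = idm L (tns L A B)) \<and>
     (\<forall>A \<in> Ob L. \<forall>B \<in> Ob L. \<forall>C \<in> Ob L. \<forall>D \<in> Ob L. \<forall>f \<in> hom L A B. \<forall>g \<in> hom L C D.
        tnsm L f g \<in> hom L (tns L A C) (tns L B D)) \<and>
     (\<forall>f \<in> Ar L. \<forall>f' \<in> Ar L. \<forall>g \<in> Ar L. \<forall>g' \<in> Ar L. Cd L f = Dm L f' \<longrightarrow> Cd L g = Dm L g' \<longrightarrow>
        tnsm L (Cp L f f') (Cp L g g') = Cp L (tnsm L f g) (tnsm L f' g')) \<and>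
     \<comment> \<open>strictness\<close>
     (\<forall>A \<in> Ob L. \<forall>B \<in> Ob L. \<forall>C \<in> Ob L. tns L (tns L A B) C = tns L A (tns L B C)) \<and>
     (\<forall>A \<in> Ob L. tns L (tunit L) A = A \<and> tns L A (tunit L) = A) \<and>
     (\<forall>f \<in> Ar L. \<forall>g \<in> Ar L. \<forall>h \<in> Ar L. tnsm L (tnsm L f g) h = tnsm L f (tnsm L g h)) \<and>
     (\<forall>f \<in> Ar L. tnsm L (idm L (tunit L)) f = f \<and> tnsm L f (idm L (tunit L)) = f) \<and>
     \<comment> \<open>symmetry\<close>
     (\<forall>A \<in> Ob L. \<forall>B \<in> Ob L. symm L A B \<in> hom L (tns L A B) (tns L B A) \<and>
        Cp L (symm L A B) (symm L B A) = idm L (tns L A B)) \<and>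
     (\<forall>A \<in> Ob L. \<forall>A' \<in> Ob L. \<forall>B \<in> Ob L. \<forall>B' \<in> Ob L. \<forall>f \<in> hom L A A'. \<forall>g \<in> hom L B B'.
        Cp L (tnsm L f g) (symm L A' B') = Cp L (symm L A B) (tnsm L g f)) \<and>
     (\<forall>A \<in> Ob L. \<forall>B \<in> Ob L. \<forall>C \<in> Ob L.
        symm L A (tns L B C) = Cp L (tnsm L (symm L A B) (idm L C)) (tnsm L (idm L B) (symm L A C))) \<and>
     \<comment> \<open>CMon-enrichment\<close>
     (\<forall>A \<in> Ob L. \<forall>B \<in> Ob L. zer L A B \<in> hom L A B \<and>
        (\<forall>f \<in> hom L A B. \<forall>g \<in> hom L A B. pls L f g \<in> hom L A B \<and> pls L f g = pls L g f \<and>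
            pls L f (zer L A B) = f \<and>
            (\<forall>h \<in> hom L A B. pls L (pls L f g) h = pls L f (pls L g h)))) \<and>
     (\<forall>A \<in> Ob L. \<forall>B \<in> Ob L. \<forall>C \<in> Ob L. \<forall>f \<in> hom L A B. \<forall>g \<in> hom L B C. \<forall>h \<in> hom L B C.
        Cp L f (pls L g h) = pls L (Cp L f g) (Cp L f h) \<and> Cp L f (zer L B C) = zer L A C) \<and>
     (\<forall>A \<in> Ob L. \<forall>B \<in> Ob L. \<forall>C \<in> Ob L. \<forall>g \<in> hom L A B. \<forall>h \<in> hom L A B. \<forall>f \<in> hom L B C.
        Cp L (pls L g h) f = pls L (Cp L g f) (Cp L h f) \<and> Cp L (zer L A B) f = zer L A C) \<and>
     \<comment> \<open>bilinearity of the tensor\<close>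
     (\<forall>A \<in> Ob L. \<forall>B \<in> Ob L. \<forall>C \<in> Ob L. \<forall>D \<in> Ob L. \<forall>f \<in> hom L A B. \<forall>g \<in> hom L C D. \<forall>h \<in> hom L C D.
        tnsm L f (pls L g h) = pls L (tnsm L f g) (tnsm L f h) \<and>
        tnsm L f (zer L C D) = zer L (tns L A C) (tns L B D)) \<and>
     (\<forall>A \<in> Ob L. \<forall>B \<in> Ob L. \<forall>C \<in> Ob L. \<forall>D \<in> Ob L. \<forall>f \<in> hom L A B. \<forall>g \<in> hom L A B. \<forall>h \<in> hom L C D.
        tnsm L (pls L f g) h = pls L (tnsm L f h) (tnsm L g h) \<and>
        tnsm L (zer L A B) h = zer L (tns L A C) (tns L B D)) \<and>
     \<comment> \<open>finite products\<close>
     bterm L \<in> Ob L \<and>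
     (\<forall>A \<in> Ob L. bbang L A \<in> hom L A (bterm L) \<and> (\<forall>h \<in> hom L A (bterm L). h = bbang L A)) \<and>
     (\<forall>A \<in> Ob L. \<forall>B \<in> Ob L. bp L A B \<in> Ob L \<and>
        bq1 L A B \<in> hom L (bp L A B) A \<and> bq2 L A B \<in> hom L (bp L A B) B) \<and>
     (\<forall>C \<in> Ob L. \<forall>A \<in> Ob L. \<forall>B \<in> Ob L. \<forall>f \<in> hom L C A. \<forall>g \<in> hom L C B.
        btpl L f g \<in> hom L C (bp L A B) \<and>
        Cp L (btpl L f g) (bq1 L A B) = f \<and> Cp L (btpl L f g) (bq2 L A B) = g) \<and>
     (\<forall>C \<in> Ob L. \<forall>A \<in> Ob L. \<forall>B \<in> Ob L. \<forall>h \<in> hom L C (bp L A B).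
        h = btpl L (Cp L h (bq1 L A B)) (Cp L h (bq2 L A B)))"

text \<open>Biproduct injections (A \<oplus> B is the product; injections via zero maps).\<close>
definition binj1 :: "('o,'m,'x) acat_scheme \<Rightarrow> 'o \<Rightarrow> 'o \<Rightarrow> 'm" where
  "binj1 L A B = btpl L (idm L A) (zer L A B)"
definition binj2 :: "('o,'m,'x) acat_scheme \<Rightarrow> 'o \<Rightarrow> 'o \<Rightarrow> 'm" where
  "binj2 L A B = btpl L (zer L B A) (idm L B)"

section \<open>LNL adjunction data\<close>

record ('c,'f,'l,'g) lnl =
  Fo    :: "'c \<Rightarrow> 'l"
  Fm    :: "'f \<Rightarrow> 'g"
  Uo    :: "'l \<Rightarrow> 'c"
  Um    :: "'g \<Rightarrow> 'f"
  eta   :: "'c \<Rightarrow> 'f"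
  eps   :: "'l \<Rightarrow> 'g"
  mm    :: "'c \<Rightarrow> 'c \<Rightarrow> 'g"
  mminv :: "'c \<Rightarrow> 'c \<Rightarrow> 'g"
  mone  :: "'g"
  moneinv :: "'g"
  nn    :: "'l \<Rightarrow> 'l \<Rightarrow> 'f"
  nzero :: "'f"

definition is_lnl :: "('c,'f,'x) ccat_scheme \<Rightarrow> ('l,'g,'y) acat_scheme \<Rightarrow> ('c,'f,'l,'g,'z) lnl_scheme \<Rightarrow> bool" where
  "is_lnl C L M \<longleftrightarrow>
     is_functor C L (Fo M) (Fm M) \<and> is_functor L C (Uo M) (Um M) \<and>
     \<comment> \<open>adjunction F \<dashv> U with unit eta and counit eps\<close>
     (\<forall>X \<in> Ob C. eta M X \<in> hom C X (Uo M (Fo M X))) \<and>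
     (\<forall>f \<in> Ar C. Cp C f (eta M (Cd C f)) = Cp C (eta M (Dm C f)) (Um M (Fm M f))) \<and>
     (\<forall>A \<in> Ob L. eps M A \<in> hom L (Fo M (Uo M A)) A) \<and>
     (\<forall>g \<in> Ar L. Cp L (Fm M (Um M g)) (eps M (Cd L g)) = Cp L (eps M (Dm L g)) g) \<and>
     (\<forall>X \<in> Ob C. Cp L (Fm M (eta M X)) (eps M (Fo M X)) = idm L (Fo M X)) \<and>
     (\<forall>A \<in> Ob L. Cp C (eta M (Uo M A)) (Um M (eps M A)) = idm C (Uo M A)) \<and>
     \<comment> \<open>F strong symmetric monoidal\<close>
     (\<forall>X \<in> Ob C. \<forall>Y \<in> Ob C.
        mm M X Y \<in> hom L (tns L (Fo M X) (Fo M Y)) (Fo M (prd C X Y)) \<and>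
        mminv M X Y \<in> hom L (Fo M (prd C X Y)) (tns L (Fo M X) (Fo M Y)) \<and>
        Cp L (mm M X Y) (mminv M X Y) = idm L (tns L (Fo M X) (Fo M Y)) \<and>
        Cp L (mminv M X Y) (mm M X Y) = idm L (Fo M (prd C X Y)) \<and>
        Cp L (symm L (Fo M X) (Fo M Y)) (mm M Y X) = Cp L (mm M X Y) (Fm M (swp C X Y))) \<and>
     mone M \<in> hom L (tunit L) (Fo M (trm C)) \<and>
     moneinv M \<in> hom L (Fo M (trm C)) (tunit L) \<and>
     Cp L (mone M) (moneinv M) = idm L (tunit L) \<and>
     Cp L (moneinv M) (mone M) = idm L (Fo M (trm C)) \<and>
     (\<forall>f \<in> Ar C. \<forall>g \<in> Ar C.
        Cp L (tnsm L (Fm M f) (Fm M g)) (mm M (Cd C f) (Cd C g)) = Cp L (mm M (Dm C f) (Dm C g)) (Fm M (prdm C f g))) \<and>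
     (\<forall>X \<in> Ob C. \<forall>Y \<in> Ob C. \<forall>Z \<in> Ob C.
        Cp L (tnsm L (mm M X Y) (idm L (Fo M Z))) (mm M (prd C X Y) Z)
          = Cp L (tnsm L (idm L (Fo M X)) (mm M Y Z)) (mm M X (prd C Y Z))) \<and>
     (\<forall>X \<in> Ob C. Cp L (tnsm L (mone M) (idm L (Fo M X))) (mm M (trm C) X) = idm L (Fo M X) \<and>
                  Cp L (tnsm L (idm L (Fo M X)) (mone M)) (mm M X (trm C)) = idm L (Fo M X)) \<and>
     \<comment> \<open>U lax symmetric monoidal\<close>
     (\<forall>A \<in> Ob L. \<forall>B \<in> Ob L.
        nn M A B \<in> hom C (prd C (Uo M A) (Uo M B)) (Uo M (tns L A B)) \<and>
        Cp C (swp C (Uo M A) (Uo M B)) (nn M B A) = Cp C (nn M A B) (Um M (symm L A B))) \<and>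
     nzero M \<in> hom C (trm C) (Uo M (tunit L)) \<and>
     (\<forall>f \<in> Ar L. \<forall>g \<in> Ar L.
        Cp C (prdm C (Um M f) (Um M g)) (nn M (Cd L f) (Cd L g)) = Cp C (nn M (Dm L f) (Dm L g)) (Um M (tnsm L f g))) \<and>
     (\<forall>A \<in> Ob L. \<forall>B \<in> Ob L. \<forall>D \<in> Ob L.
        Cp C (prdm C (nn M A B) (idm C (Uo M D))) (nn M (tns L A B) D)
          = Cp C (prdm C (idm C (Uo M A)) (nn M B D)) (nn M A (tns L B D))) \<and>
     (\<forall>A \<in> Ob L. Cp C (prdm C (nzero M) (idm C (Uo M A))) (nn M (tunit L) A) = idm C (Uo M A) \<and>
                  Cp C (prdm C (idm C (Uo M A)) (nzero M)) (nn M A (tunit L)) = idm C (Uo M A)) \<and>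
     \<comment> \<open>unit and counit are monoidal natural transformations\<close>
     (\<forall>X \<in> Ob C. \<forall>Y \<in> Ob C.
        Cp C (Cp C (prdm C (eta M X) (eta M Y)) (nn M (Fo M X) (Fo M Y))) (Um M (mm M X Y)) = eta M (prd C X Y)) \<and>
     Cp C (nzero M) (Um M (mone M)) = eta M (trm C) \<and>
     (\<forall>A \<in> Ob L. \<forall>B \<in> Ob L.
        Cp L (Cp L (mm M (Uo M A) (Uo M B)) (Fm M (nn M A B))) (eps M (tns L A B)) = tnsm L (eps M A) (eps M B)) \<and>
     Cp L (Cp L (mone M) (Fm M (nzero M))) (eps M (tunit L)) = idm L (tunit L)"

section \<open>The category LS(C)\<close>

text \<open>Since the fibre component A of the source cannot be read off u (strict tensor),
  operations that need it take it as an explicit argument.\<close>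

definition ls_hom where
  "ls_hom C L M XA YB = {(f,u). f \<in> hom C (fst XA) (fst YB) \<and>
       u \<in> hom L (tns L (Fo M (fst XA)) (snd XA)) (snd YB)}"

definition cpy where
  "cpy C L M X = Cp L (Fm M (diag C X)) (mminv M X X)"

definition wkn where
  "wkn C L M X = Cp L (Fm M (tbang C X)) (moneinv M)"

definition ls_comp where
  "ls_comp C L M A fu gv =
     (Cp C (fst fu) (fst gv),
      Cp L (Cp L (tnsm L (cpy C L M (Dm C (fst fu))) (idm L A)) (tnsm L (Fm M (fst fu)) (snd fu))) (snd gv))"

definition ls_id where
  "ls_id C L M X A = (idm C X, tnsm L (wkn C L M X) (idm L A))"

definition ls_pair where
  "ls_pair C L fu gv = (tpl C (fst fu) (fst gv), btpl L (snd fu) (snd gv))"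

definition ls_inj2 where
  "ls_inj2 C L M X A B = (idm C X, tnsm L (wkn C L M X) (binj2 L A B))"

definition ls_inv where
  "ls_inv C L M XA YB phi = (THE psi. psi \<in> ls_hom C L M YB XA \<and>
       ls_comp C L M (snd XA) phi psi = ls_id C L M (fst XA) (snd XA) \<and>
       ls_comp C L M (snd YB) psi phi = ls_id C L M (fst YB) (snd YB))"

definition reindex where  \<comment> \<open>h^*(id_X, v) for h : X' \<rightarrow> X and (id_X,v) : (X,B) \<rightarrow> (X,B')\<close>
  "reindex C L M h B iv = (idm C (Dm C h), Cp L (tnsm L (Fm M h) (idm L B)) (snd iv))"

section \<open>Generalised differential Seely categories\<close>

definition phi where
  "phi C L T X Y = ls_pair C L (T (pi1 C X Y)) (T (pi2 C X Y))"

definition i2 where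
  "i2 C L M T lam X Y = ls_comp C L M (lam Y)
      (ls_inj2 C L M (prd C X Y) (lam X) (lam Y))
      (ls_inv C L M (prd C X Y, lam (prd C X Y)) (prd C X Y, bp L (lam X) (lam Y)) (phi C L T X Y))"

definition compr where
  "compr C L M A fu =
     tpl C (Cp C (pi1 C (Dm C (fst fu)) (Uo M A)) (fst fu))
           (Cp C (Cp C (prdm C (eta M (Dm C (fst fu))) (idm C (Uo M A))) (nn M (Fo M (Dm C (fst fu))) A))
                 (Um M (snd fu)))"

definition Wk where
  "Wk C L M A fu = (compr C L M A fu,
       Cp L (tnsm L (Fm M (pi1 C (Dm C (fst fu)) (Uo M A))) (idm L A)) (snd fu))"

definition is_gdsc where
  "is_gdsc C L M T lam \<longleftrightarrow> is_cart C \<and> is_addsmc L \<and> is_lnl C L M \<and>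
     \<comment> \<open>T : C \<rightarrow> LS(C) is a functor with T(X) = (X, lam X)\<close>
     (\<forall>X \<in> Ob C. lam X \<in> Ob L \<and> T (idm C X) = ls_id C L M X (lam X)) \<and>
     (\<forall>h \<in> Ar C. T h \<in> ls_hom C L M (Dm C h, lam (Dm C h)) (Cd C h, lam (Cd C h))) \<and>
     (\<forall>h \<in> Ar C. \<forall>k \<in> Ar C. Cd C h = Dm C k \<longrightarrow> T (Cp C h k) = ls_comp C L M (lam (Dm C h)) (T h) (T k)) \<and>
     \<comment> \<open>(t.1)\<close>
     (\<forall>h \<in> Ar C. fst (T h) = h) \<and>
     (\<forall>X \<in> Ob C. \<forall>Y \<in> Ob C. \<exists>psi \<in> ls_hom C L M (prd C X Y, bp L (lam X) (lam Y)) (prd C X Y, lam (prd C X Y)).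
        ls_comp C L M (lam (prd C X Y)) (phi C L T X Y) psi = ls_id C L M (prd C X Y) (lam (prd C X Y)) \<and>
        ls_comp C L M (bp L (lam X) (lam Y)) psi (phi C L T X Y) = ls_id C L M (prd C X Y) (bp L (lam X) (lam Y))) \<and>
     \<comment> \<open>(t.2)\<close>
     (\<forall>A \<in> Ob L. lam (Uo M A) = A) \<and>
     \<comment> \<open>(t.3)\<close>
     (\<forall>X \<in> Ob C. \<forall>Y \<in> Ob C. \<forall>A \<in> Ob L. \<forall>B \<in> Ob L. \<forall>fu \<in> ls_hom C L M (X,A) (Y,B).
        ls_comp C L M A (Wk C L M A fu) (i2 C L M T lam Y (Uo M B))
          = ls_comp C L M (lam (Uo M A)) (i2 C L M T lam X (Uo M A)) (T (compr C L M A fu)))"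

definition Dif where
  "Dif C T h = (idm C (Dm C h), snd (T h))"

definition D2 where
  "D2 C L M T lam X Y h = ls_comp C L M (lam Y) (i2 C L M T lam X Y) (Dif C T h)"

end

theory Submission
  imports Defs
begin


lemma homI: "f \<in> Ar K \<Longrightarrow> Dm K f = X \<Longrightarrow> Cd K f = Y \<Longrightarrow> f \<in> hom K X Y"
  by (simp add: hom_def)
lemma homD: "f \<in> hom K X Y \<Longrightarrow> f \<in> Ar K \<and> Dm K f = X \<and> Cd K f = Y"
  by (simp add: hom_def)

context fixes K :: "('o,'m,'x) cat_scheme" assumes cK: "is_cat K"
begin
lemma cat_Dm_Ob: "f \<in> Ar K \<Longrightarrow> Dm K f \<in> Ob K" using cK by (simp add: is_cat_def)
lemma cat_Cd_Ob: "f \<in> Ar K \<Longrightarrow> Cd K f \<in> Ob K" using cK by (simp add: is_cat_def)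
lemma cat_id: "X \<in> Ob K \<Longrightarrow> idm K X \<in> Ar K" "X \<in> Ob K \<Longrightarrow> Dm K (idm K X) = X"
   "X \<in> Ob K \<Longrightarrow> Cd K (idm K X) = X"
  using cK by (auto simp add: is_cat_def hom_def)
lemma cat_comp: "f \<in> Ar K \<Longrightarrow> g \<in> Ar K \<Longrightarrow> Cd K f = Dm K g \<Longrightarrow> Cp K f g \<in> Ar K"
   "f \<in> Ar K \<Longrightarrow> g \<in> Ar K \<Longrightarrow> Cd K f = Dm K g \<Longrightarrow> Dm K (Cp K f g) = Dm K f"
   "f \<in> Ar K \<Longrightarrow> g \<in> Ar K \<Longrightarrow> Cd K f = Dm K g \<Longrightarrow> Cd K (Cp K f g) = Cd K g"
  using cK by (auto simp add: is_cat_def hom_def)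
lemma cat_idl: "f \<in> Ar K \<Longrightarrow> Dm K f = X \<Longrightarrow> Cp K (idm K X) f = f"
  using cK by (auto simp add: is_cat_def)
lemma cat_idr: "f \<in> Ar K \<Longrightarrow> Cd K f = X \<Longrightarrow> Cp K f (idm K X) = f"
  using cK by (auto simp add: is_cat_def)
lemma cat_assoc: "f \<in> Ar K \<Longrightarrow> g \<in> Ar K \<Longrightarrow> h \<in> Ar K \<Longrightarrow> Cd K f = Dm K g \<Longrightarrow> Cd K g = Dm K h \<Longrightarrow>
   Cp K (Cp K f g) h = Cp K f (Cp K g h)"
  using cK unfolding is_cat_def by blast
end




locale gd =
  fixes C :: "('o,'m,'x) ccat_scheme" and L :: "('l,'g,'y) acat_scheme"
    and M :: "('o,'m,'l,'g,'z) lnl_scheme" and T :: "'m \<Rightarrow> 'm \<times> 'g" and lam :: "'o \<Rightarrow> 'l"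
  assumes gdsc: "is_gdsc C L M T lam"
begin

lemma cart: "is_cart C" using gdsc by (simp add: is_gdsc_def)
lemma addsmc: "is_addsmc L" using gdsc by (simp add: is_gdsc_def)
lemma lnl: "is_lnl C L M" using gdsc by (simp add: is_gdsc_def)
lemma cC: "is_cat (C::('o,'m,'x) ccat_scheme)" using cart by (simp add: is_cart_def)
lemma cL: "is_cat (L::('l,'g,'y) acat_scheme)" using addsmc by (simp add: is_addsmc_def)

lemmas C_id = cat_id[OF cC] and C_comp = cat_comp[OF cC] and C_idl = cat_idl[OF cC]
  and C_idr = cat_idr[OF cC] and C_assoc = cat_assoc[OF cC]
  and C_Dm_Ob = cat_Dm_Ob[OF cC] and C_Cd_Ob = cat_Cd_Ob[OF cC]
lemmas L_id = cat_id[OF cL] and L_comp = cat_comp[OF cL] and L_idl = cat_idl[OF cL]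
  and L_idr = cat_idr[OF cL] and L_assoc = cat_assoc[OF cL]
  and L_Dm_Ob = cat_Dm_Ob[OF cL] and L_Cd_Ob = cat_Cd_Ob[OF cL]

subsection \<open>Cartesian structure\<close>

lemma trm_Ob: "trm C \<in> Ob C" using cart by (simp add: is_cart_def)
lemma tbang: "X \<in> Ob C \<Longrightarrow> tbang C X \<in> Ar C" "X \<in> Ob C \<Longrightarrow> Dm C (tbang C X) = X"
  "X \<in> Ob C \<Longrightarrow> Cd C (tbang C X) = trm C"
  using cart by (auto simp: is_cart_def hom_def)
lemma tbang_uniq: "h \<in> Ar C \<Longrightarrow> Dm C h = X \<Longrightarrow> Cd C h = trm C \<Longrightarrow> X \<in> Ob C \<Longrightarrow> h = tbang C X"
  using cart by (auto simp: is_cart_def hom_def)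
lemma prd_Ob: "X \<in> Ob C \<Longrightarrow> Y \<in> Ob C \<Longrightarrow> prd C X Y \<in> Ob C"
  using cart by (auto simp: is_cart_def hom_def)
lemma pi1: "X \<in> Ob C \<Longrightarrow> Y \<in> Ob C \<Longrightarrow> pi1 C X Y \<in> Ar C"
  "X \<in> Ob C \<Longrightarrow> Y \<in> Ob C \<Longrightarrow> Dm C (pi1 C X Y) = prd C X Y"
  "X \<in> Ob C \<Longrightarrow> Y \<in> Ob C \<Longrightarrow> Cd C (pi1 C X Y) = X"
  using cart by (auto simp: is_cart_def hom_def)
lemma pi2: "X \<in> Ob C \<Longrightarrow> Y \<in> Ob C \<Longrightarrow> pi2 C X Y \<in> Ar C"
  "X \<in> Ob C \<Longrightarrow> Y \<in> Ob C \<Longrightarrow> Dm C (pi2 C X Y) = prd C X Y"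
  "X \<in> Ob C \<Longrightarrow> Y \<in> Ob C \<Longrightarrow> Cd C (pi2 C X Y) = Y"
  using cart by (auto simp: is_cart_def hom_def)

lemma tpl_all: "f \<in> Ar C \<Longrightarrow> g \<in> Ar C \<Longrightarrow> Dm C f = Dm C g \<Longrightarrow>
   tpl C f g \<in> hom C (Dm C f) (prd C (Cd C f) (Cd C g)) \<and>
   Cp C (tpl C f g) (pi1 C (Cd C f) (Cd C g)) = f \<and> Cp C (tpl C f g) (pi2 C (Cd C f) (Cd C g)) = g"
proof -
  assume a: "f \<in> Ar C" "g \<in> Ar C" "Dm C f = Dm C g"
  have h: "Dm C f \<in> Ob C" "Cd C f \<in> Ob C" "Cd C g \<in> Ob C" using a C_Dm_Ob C_Cd_Ob by auto
  have "f \<in> hom C (Dm C f) (Cd C f)" "g \<in> hom C (Dm C f) (Cd C g)" using a by (auto simp: hom_def)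
  moreover have "\<forall>Z \<in> Ob C. \<forall>X \<in> Ob C. \<forall>Y \<in> Ob C. \<forall>f \<in> hom C Z X. \<forall>g \<in> hom C Z Y.
        tpl C f g \<in> hom C Z (prd C X Y) \<and>
        Cp C (tpl C f g) (pi1 C X Y) = f \<and> Cp C (tpl C f g) (pi2 C X Y) = g"
    using cart unfolding is_cart_def by (elim conjE) assumption
  ultimately show ?thesis using h by blast
qed
lemma tpl: "f \<in> Ar C \<Longrightarrow> g \<in> Ar C \<Longrightarrow> Dm C f = Dm C g \<Longrightarrow> tpl C f g \<in> Ar C"
  "f \<in> Ar C \<Longrightarrow> g \<in> Ar C \<Longrightarrow> Dm C f = Dm C g \<Longrightarrow> Dm C (tpl C f g) = Dm C f"
  "f \<in> Ar C \<Longrightarrow> g \<in> Ar C \<Longrightarrow> Dm C f = Dm C g \<Longrightarrow> Cd C (tpl C f g) = prd C (Cd C f) (Cd C g)"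
  using tpl_all by (auto simp: hom_def)
lemma tpl_pi1: "f \<in> Ar C \<Longrightarrow> g \<in> Ar C \<Longrightarrow> Dm C f = Dm C g \<Longrightarrow> Cd C f = X \<Longrightarrow> Cd C g = Y \<Longrightarrow>
   Cp C (tpl C f g) (pi1 C X Y) = f"
  using tpl_all by auto
lemma tpl_pi2: "f \<in> Ar C \<Longrightarrow> g \<in> Ar C \<Longrightarrow> Dm C f = Dm C g \<Longrightarrow> Cd C f = X \<Longrightarrow> Cd C g = Y \<Longrightarrow>
   Cp C (tpl C f g) (pi2 C X Y) = g"
  using tpl_all by auto
lemma tpl_eta: "h \<in> Ar C \<Longrightarrow> Cd C h = prd C X Y \<Longrightarrow> X \<in> Ob C \<Longrightarrow> Y \<in> Ob C \<Longrightarrow>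
   h = tpl C (Cp C h (pi1 C X Y)) (Cp C h (pi2 C X Y))"
proof -
  assume a: "h \<in> Ar C" "Cd C h = prd C X Y" "X \<in> Ob C" "Y \<in> Ob C"
  have "h \<in> hom C (Dm C h) (prd C X Y)" "Dm C h \<in> Ob C" using a C_Dm_Ob by (auto simp: hom_def)
  moreover have "\<forall>Z \<in> Ob C. \<forall>X \<in> Ob C. \<forall>Y \<in> Ob C. \<forall>h \<in> hom C Z (prd C X Y).
        h = tpl C (Cp C h (pi1 C X Y)) (Cp C h (pi2 C X Y))"
    using cart unfolding is_cart_def by (elim conjE) assumption
  ultimately show ?thesis using a by blast
qed
lemma prd_assoc: "X \<in> Ob C \<Longrightarrow> Y \<in> Ob C \<Longrightarrow> Z \<in> Ob C \<Longrightarrow> prd C (prd C X Y) Z = prd C X (prd C Y Z)"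
  using cart by (simp add: is_cart_def)
lemma alpha_id: "X \<in> Ob C \<Longrightarrow> Y \<in> Ob C \<Longrightarrow> Z \<in> Ob C \<Longrightarrow>
   tpl C (Cp C (pi1 C (prd C X Y) Z) (pi1 C X Y))
              (tpl C (Cp C (pi1 C (prd C X Y) Z) (pi2 C X Y)) (pi2 C (prd C X Y) Z))
          = idm C (prd C X (prd C Y Z))"
  using cart by (simp add: is_cart_def)
lemma prd_unit: "X \<in> Ob C \<Longrightarrow> prd C (trm C) X = X" "X \<in> Ob C \<Longrightarrow> prd C X (trm C) = X"
  "X \<in> Ob C \<Longrightarrow> pi2 C (trm C) X = idm C X" "X \<in> Ob C \<Longrightarrow> pi1 C X (trm C) = idm C X"
  using cart by (simp_all add: is_cart_def)

subsection \<open>Monoidal structure of L\<close>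

lemma tunit_Ob: "tunit L \<in> Ob L" using addsmc by (simp add: is_addsmc_def)
lemma tns_Ob: "A \<in> Ob L \<Longrightarrow> B \<in> Ob L \<Longrightarrow> tns L A B \<in> Ob L"
  using addsmc by (simp add: is_addsmc_def)
lemma tnsm_id: "A \<in> Ob L \<Longrightarrow> B \<in> Ob L \<Longrightarrow> tnsm L (idm L A) (idm L B) = idm L (tns L A B)"
  using addsmc by (simp add: is_addsmc_def)
lemma tnsm_all: "f \<in> Ar L \<Longrightarrow> g \<in> Ar L \<Longrightarrow>
   tnsm L f g \<in> hom L (tns L (Dm L f) (Dm L g)) (tns L (Cd L f) (Cd L g))"
proof -
  assume a: "f \<in> Ar L" "g \<in> Ar L"
  have "f \<in> hom L (Dm L f) (Cd L f)" "g \<in> hom L (Dm L g) (Cd L g)" using a by (auto simp: hom_def)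
  moreover have "Dm L f \<in> Ob L" "Cd L f \<in> Ob L" "Dm L g \<in> Ob L" "Cd L g \<in> Ob L"
    using a L_Dm_Ob L_Cd_Ob by auto
  moreover have "\<forall>A \<in> Ob L. \<forall>B \<in> Ob L. \<forall>C \<in> Ob L. \<forall>D \<in> Ob L. \<forall>f \<in> hom L A B. \<forall>g \<in> hom L C D.
        tnsm L f g \<in> hom L (tns L A C) (tns L B D)"
    using addsmc unfolding is_addsmc_def by (elim conjE) assumption
  ultimately show ?thesis by blast
qed
lemma tnsm: "f \<in> Ar L \<Longrightarrow> g \<in> Ar L \<Longrightarrow> tnsm L f g \<in> Ar L"
  "f \<in> Ar L \<Longrightarrow> g \<in> Ar L \<Longrightarrow> Dm L (tnsm L f g) = tns L (Dm L f) (Dm L g)"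
  "f \<in> Ar L \<Longrightarrow> g \<in> Ar L \<Longrightarrow> Cd L (tnsm L f g) = tns L (Cd L f) (Cd L g)"
  using tnsm_all by (auto simp: hom_def)
lemma interchange: "f \<in> Ar L \<Longrightarrow> f' \<in> Ar L \<Longrightarrow> g \<in> Ar L \<Longrightarrow> g' \<in> Ar L \<Longrightarrow> Cd L f = Dm L f' \<Longrightarrow> Cd L g = Dm L g' \<Longrightarrow>
        tnsm L (Cp L f f') (Cp L g g') = Cp L (tnsm L f g) (tnsm L f' g')"
proof -
  have ax: "\<forall>f \<in> Ar L. \<forall>f' \<in> Ar L. \<forall>g \<in> Ar L. \<forall>g' \<in> Ar L. Cd L f = Dm L f' \<longrightarrow> Cd L g = Dm L g' \<longrightarrow> tnsm L (Cp L f f') (Cp L g g') = Cp L (tnsm L f g) (tnsm L f' g')"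
    using addsmc unfolding is_addsmc_def by (elim conjE) assumption
  then show "f \<in> Ar L \<Longrightarrow> f' \<in> Ar L \<Longrightarrow> g \<in> Ar L \<Longrightarrow> g' \<in> Ar L \<Longrightarrow> Cd L f = Dm L f' \<Longrightarrow> Cd L g = Dm L g' \<Longrightarrow>
        tnsm L (Cp L f f') (Cp L g g') = Cp L (tnsm L f g) (tnsm L f' g')" by blast
qed
lemma tns_assoc: "A \<in> Ob L \<Longrightarrow> B \<in> Ob L \<Longrightarrow> D \<in> Ob L \<Longrightarrow> tns L (tns L A B) D = tns L A (tns L B D)"
proof -
  have ax: "\<forall>A \<in> Ob L. \<forall>B \<in> Ob L. \<forall>C \<in> Ob L. tns L (tns L A B) C = tns L A (tns L B C)"
    using addsmc unfolding is_addsmc_def by (elim conjE) assumption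
  then show "A \<in> Ob L \<Longrightarrow> B \<in> Ob L \<Longrightarrow> D \<in> Ob L \<Longrightarrow> tns L (tns L A B) D = tns L A (tns L B D)" by blast
qed
lemma tns_unit_ax: "\<forall>A \<in> Ob L. tns L (tunit L) A = A \<and> tns L A (tunit L) = A"
  using addsmc unfolding is_addsmc_def by (elim conjE) assumption
lemma tns_unit: "A \<in> Ob L \<Longrightarrow> tns L (tunit L) A = A" "A \<in> Ob L \<Longrightarrow> tns L A (tunit L) = A"
  using tns_unit_ax by blast+
lemma tnsm_assoc: "f \<in> Ar L \<Longrightarrow> g \<in> Ar L \<Longrightarrow> h \<in> Ar L \<Longrightarrow> tnsm L (tnsm L f g) h = tnsm L f (tnsm L g h)"
proof -
  have ax: "\<forall>f \<in> Ar L. \<forall>g \<in> Ar L. \<forall>h \<in> Ar L. tnsm L (tnsm L f g) h = tnsm L f (tnsm L g h)"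
    using addsmc unfolding is_addsmc_def by (elim conjE) assumption
  then show "f \<in> Ar L \<Longrightarrow> g \<in> Ar L \<Longrightarrow> h \<in> Ar L \<Longrightarrow> tnsm L (tnsm L f g) h = tnsm L f (tnsm L g h)" by blast
qed
lemma tnsm_unit_ax: "\<forall>f \<in> Ar L. tnsm L (idm L (tunit L)) f = f \<and> tnsm L f (idm L (tunit L)) = f"
  using addsmc unfolding is_addsmc_def by (elim conjE) assumption
lemma tnsm_unit: "f \<in> Ar L \<Longrightarrow> tnsm L (idm L (tunit L)) f = f" "f \<in> Ar L \<Longrightarrow> tnsm L f (idm L (tunit L)) = f"
  using tnsm_unit_ax by blast+
lemma zer: "A \<in> Ob L \<Longrightarrow> B \<in> Ob L \<Longrightarrow> zer L A B \<in> Ar L"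
  "A \<in> Ob L \<Longrightarrow> B \<in> Ob L \<Longrightarrow> Dm L (zer L A B) = A"
  "A \<in> Ob L \<Longrightarrow> B \<in> Ob L \<Longrightarrow> Cd L (zer L A B) = B"
proof -
  have ax: "\<forall>A \<in> Ob L. \<forall>B \<in> Ob L. zer L A B \<in> hom L A B \<and>
        (\<forall>f \<in> hom L A B. \<forall>g \<in> hom L A B. pls L f g \<in> hom L A B \<and> pls L f g = pls L g f \<and>
            pls L f (zer L A B) = f \<and>
            (\<forall>h \<in> hom L A B. pls L (pls L f g) h = pls L f (pls L g h)))"
    using addsmc unfolding is_addsmc_def by (elim conjE) assumption
  then show "A \<in> Ob L \<Longrightarrow> B \<in> Ob L \<Longrightarrow> zer L A B \<in> Ar L"
  "A \<in> Ob L \<Longrightarrow> B \<in> Ob L \<Longrightarrow> Dm L (zer L A B) = A"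
  "A \<in> Ob L \<Longrightarrow> B \<in> Ob L \<Longrightarrow> Cd L (zer L A B) = B" by (auto simp: hom_def)
qed
lemma bp_ax: "\<forall>A \<in> Ob L. \<forall>B \<in> Ob L. bp L A B \<in> Ob L \<and>
        bq1 L A B \<in> hom L (bp L A B) A \<and> bq2 L A B \<in> hom L (bp L A B) B"
  using addsmc unfolding is_addsmc_def by (elim conjE) assumption
lemma bp_Ob: "A \<in> Ob L \<Longrightarrow> B \<in> Ob L \<Longrightarrow> bp L A B \<in> Ob L"
  using bp_ax by blast
lemma bq2: "A \<in> Ob L \<Longrightarrow> B \<in> Ob L \<Longrightarrow> bq2 L A B \<in> Ar L"
  "A \<in> Ob L \<Longrightarrow> B \<in> Ob L \<Longrightarrow> Dm L (bq2 L A B) = bp L A B"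
  "A \<in> Ob L \<Longrightarrow> B \<in> Ob L \<Longrightarrow> Cd L (bq2 L A B) = B"
  using bp_ax by (auto simp: hom_def)
lemma binj2_all: "A \<in> Ob L \<Longrightarrow> B \<in> Ob L \<Longrightarrow>
   binj2 L A B \<in> hom L B (bp L A B) \<and> Cp L (binj2 L A B) (bq2 L A B) = idm L B"
proof -
  assume a: "A \<in> Ob L" "B \<in> Ob L"
  have "zer L B A \<in> hom L B A" "idm L B \<in> hom L B B" using a zer L_id by (auto simp: hom_def)
  moreover have "\<forall>C \<in> Ob L. \<forall>A \<in> Ob L. \<forall>B \<in> Ob L. \<forall>f \<in> hom L C A. \<forall>g \<in> hom L C B.
        btpl L f g \<in> hom L C (bp L A B) \<and>
        Cp L (btpl L f g) (bq1 L A B) = f \<and> Cp L (btpl L f g) (bq2 L A B) = g"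
    using addsmc unfolding is_addsmc_def by (elim conjE) assumption
  ultimately show ?thesis using a unfolding binj2_def by blast
qed
lemma binj2: "A \<in> Ob L \<Longrightarrow> B \<in> Ob L \<Longrightarrow> binj2 L A B \<in> Ar L"
  "A \<in> Ob L \<Longrightarrow> B \<in> Ob L \<Longrightarrow> Dm L (binj2 L A B) = B"
  "A \<in> Ob L \<Longrightarrow> B \<in> Ob L \<Longrightarrow> Cd L (binj2 L A B) = bp L A B"
  "A \<in> Ob L \<Longrightarrow> B \<in> Ob L \<Longrightarrow> Cp L (binj2 L A B) (bq2 L A B) = idm L B"
  using binj2_all by (auto simp: hom_def)

subsection \<open>LNL data\<close>

lemma Ffun: "is_functor C L (Fo M) (Fm M)" using lnl by (simp add: is_lnl_def)
lemma Ufun: "is_functor L C (Uo M) (Um M)" using lnl by (simp add: is_lnl_def)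
lemma Fo_Ob: "X \<in> Ob C \<Longrightarrow> Fo M X \<in> Ob L" using Ffun by (simp add: is_functor_def)
lemma Fm_id: "X \<in> Ob C \<Longrightarrow> Fm M (idm C X) = idm L (Fo M X)" using Ffun by (simp add: is_functor_def)
lemma Fm: "f \<in> Ar C \<Longrightarrow> Fm M f \<in> Ar L" "f \<in> Ar C \<Longrightarrow> Dm L (Fm M f) = Fo M (Dm C f)"
  "f \<in> Ar C \<Longrightarrow> Cd L (Fm M f) = Fo M (Cd C f)"
  using Ffun by (auto simp: is_functor_def hom_def)
lemma Fm_comp: "f \<in> Ar C \<Longrightarrow> g \<in> Ar C \<Longrightarrow> Cd C f = Dm C g \<Longrightarrow> Fm M (Cp C f g) = Cp L (Fm M f) (Fm M g)"
  using Ffun by (auto simp: is_functor_def)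
lemma Uo_Ob: "A \<in> Ob L \<Longrightarrow> Uo M A \<in> Ob C" using Ufun by (simp add: is_functor_def)
lemma Um_id: "A \<in> Ob L \<Longrightarrow> Um M (idm L A) = idm C (Uo M A)" using Ufun by (simp add: is_functor_def)
lemma Um: "f \<in> Ar L \<Longrightarrow> Um M f \<in> Ar C" "f \<in> Ar L \<Longrightarrow> Dm C (Um M f) = Uo M (Dm L f)"
  "f \<in> Ar L \<Longrightarrow> Cd C (Um M f) = Uo M (Cd L f)"
  using Ufun by (auto simp: is_functor_def hom_def)
lemma Um_comp: "f \<in> Ar L \<Longrightarrow> g \<in> Ar L \<Longrightarrow> Cd L f = Dm L g \<Longrightarrow> Um M (Cp L f g) = Cp C (Um M f) (Um M g)"
  using Ufun by (auto simp: is_functor_def)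
lemma eta: "X \<in> Ob C \<Longrightarrow> eta M X \<in> Ar C" "X \<in> Ob C \<Longrightarrow> Dm C (eta M X) = X"
  "X \<in> Ob C \<Longrightarrow> Cd C (eta M X) = Uo M (Fo M X)"
  using lnl by (auto simp: is_lnl_def hom_def)
lemma mm: "X \<in> Ob C \<Longrightarrow> Y \<in> Ob C \<Longrightarrow> mm M X Y \<in> Ar L"
  "X \<in> Ob C \<Longrightarrow> Y \<in> Ob C \<Longrightarrow> Dm L (mm M X Y) = tns L (Fo M X) (Fo M Y)"
  "X \<in> Ob C \<Longrightarrow> Y \<in> Ob C \<Longrightarrow> Cd L (mm M X Y) = Fo M (prd C X Y)"
  using lnl by (auto simp: is_lnl_def hom_def)
lemma mminv: "X \<in> Ob C \<Longrightarrow> Y \<in> Ob C \<Longrightarrow> mminv M X Y \<in> Ar L"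
  "X \<in> Ob C \<Longrightarrow> Y \<in> Ob C \<Longrightarrow> Dm L (mminv M X Y) = Fo M (prd C X Y)"
  "X \<in> Ob C \<Longrightarrow> Y \<in> Ob C \<Longrightarrow> Cd L (mminv M X Y) = tns L (Fo M X) (Fo M Y)"
  using lnl by (auto simp: is_lnl_def hom_def)
lemma mm_inv: "X \<in> Ob C \<Longrightarrow> Y \<in> Ob C \<Longrightarrow> Cp L (mm M X Y) (mminv M X Y) = idm L (tns L (Fo M X) (Fo M Y))"
  "X \<in> Ob C \<Longrightarrow> Y \<in> Ob C \<Longrightarrow> Cp L (mminv M X Y) (mm M X Y) = idm L (Fo M (prd C X Y))"
  using lnl by (auto simp: is_lnl_def)
lemma mone: "mone M \<in> Ar L" "Dm L (mone M) = tunit L" "Cd L (mone M) = Fo M (trm C)"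
  "moneinv M \<in> Ar L" "Dm L (moneinv M) = Fo M (trm C)" "Cd L (moneinv M) = tunit L"
  "Cp L (mone M) (moneinv M) = idm L (tunit L)" "Cp L (moneinv M) (mone M) = idm L (Fo M (trm C))"
  using lnl by (auto simp: is_lnl_def hom_def)
lemma mm_nat: "f \<in> Ar C \<Longrightarrow> g \<in> Ar C \<Longrightarrow>
   Cp L (tnsm L (Fm M f) (Fm M g)) (mm M (Cd C f) (Cd C g)) = Cp L (mm M (Dm C f) (Dm C g)) (Fm M (prdm C f g))"
  using lnl by (auto simp: is_lnl_def)
lemma mm_assoc: "X \<in> Ob C \<Longrightarrow> Y \<in> Ob C \<Longrightarrow> Z \<in> Ob C \<Longrightarrow>
        Cp L (tnsm L (mm M X Y) (idm L (Fo M Z))) (mm M (prd C X Y) Z)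
          = Cp L (tnsm L (idm L (Fo M X)) (mm M Y Z)) (mm M X (prd C Y Z))"
  using lnl by (auto simp: is_lnl_def)
lemma mm_unit: "X \<in> Ob C \<Longrightarrow> Cp L (tnsm L (mone M) (idm L (Fo M X))) (mm M (trm C) X) = idm L (Fo M X)"
  "X \<in> Ob C \<Longrightarrow> Cp L (tnsm L (idm L (Fo M X)) (mone M)) (mm M X (trm C)) = idm L (Fo M X)"
  using lnl by (auto simp: is_lnl_def)
lemma nn: "A \<in> Ob L \<Longrightarrow> B \<in> Ob L \<Longrightarrow> nn M A B \<in> Ar C"
  "A \<in> Ob L \<Longrightarrow> B \<in> Ob L \<Longrightarrow> Dm C (nn M A B) = prd C (Uo M A) (Uo M B)"
  "A \<in> Ob L \<Longrightarrow> B \<in> Ob L \<Longrightarrow> Cd C (nn M A B) = Uo M (tns L A B)"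
  using lnl by (auto simp: is_lnl_def hom_def)

lemma lam_Ob: "X \<in> Ob C \<Longrightarrow> lam X \<in> Ob L" using gdsc by (simp add: is_gdsc_def)
lemma T_id: "X \<in> Ob C \<Longrightarrow> T (idm C X) = ls_id C L M X (lam X)" using gdsc by (simp add: is_gdsc_def)
lemma T_hom: "h \<in> Ar C \<Longrightarrow> T h \<in> ls_hom C L M (Dm C h, lam (Dm C h)) (Cd C h, lam (Cd C h))"
  using gdsc by (simp add: is_gdsc_def)
lemma T_comp: "h \<in> Ar C \<Longrightarrow> k \<in> Ar C \<Longrightarrow> Cd C h = Dm C k \<Longrightarrow> T (Cp C h k) = ls_comp C L M (lam (Dm C h)) (T h) (T k)"
  using gdsc by (simp add: is_gdsc_def)
lemma T_fst: "h \<in> Ar C \<Longrightarrow> fst (T h) = h" using gdsc by (simp add: is_gdsc_def)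
lemma phi_iso: "X \<in> Ob C \<Longrightarrow> Y \<in> Ob C \<Longrightarrow> \<exists>psi \<in> ls_hom C L M (prd C X Y, bp L (lam X) (lam Y)) (prd C X Y, lam (prd C X Y)).
        ls_comp C L M (lam (prd C X Y)) (phi C L T X Y) psi = ls_id C L M (prd C X Y) (lam (prd C X Y)) \<and>
        ls_comp C L M (bp L (lam X) (lam Y)) psi (phi C L T X Y) = ls_id C L M (prd C X Y) (bp L (lam X) (lam Y))"
proof -
  have ax: "\<forall>X \<in> Ob C. \<forall>Y \<in> Ob C. \<exists>psi \<in> ls_hom C L M (prd C X Y, bp L (lam X) (lam Y)) (prd C X Y, lam (prd C X Y)).
        ls_comp C L M (lam (prd C X Y)) (phi C L T X Y) psi = ls_id C L M (prd C X Y) (lam (prd C X Y)) \<and>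
        ls_comp C L M (bp L (lam X) (lam Y)) psi (phi C L T X Y) = ls_id C L M (prd C X Y) (bp L (lam X) (lam Y))"
    using gdsc unfolding is_gdsc_def by (elim conjE) assumption
  assume "X \<in> Ob C" "Y \<in> Ob C"
  then show ?thesis using ax by blast
qed
lemma lam_U: "A \<in> Ob L \<Longrightarrow> lam (Uo M A) = A" using gdsc by (simp add: is_gdsc_def)
lemma t3: "X \<in> Ob C \<Longrightarrow> Y \<in> Ob C \<Longrightarrow> A \<in> Ob L \<Longrightarrow> B \<in> Ob L \<Longrightarrow> fu \<in> ls_hom C L M (X,A) (Y,B) \<Longrightarrow>
        ls_comp C L M A (Wk C L M A fu) (i2 C L M T lam Y (Uo M B))
          = ls_comp C L M (lam (Uo M A)) (i2 C L M T lam X (Uo M A)) (T (compr C L M A fu))"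
proof -
  have ax: "\<forall>X \<in> Ob C. \<forall>Y \<in> Ob C. \<forall>A \<in> Ob L. \<forall>B \<in> Ob L. \<forall>fu \<in> ls_hom C L M (X,A) (Y,B).
        ls_comp C L M A (Wk C L M A fu) (i2 C L M T lam Y (Uo M B))
          = ls_comp C L M (lam (Uo M A)) (i2 C L M T lam X (Uo M A)) (T (compr C L M A fu))"
    using gdsc unfolding is_gdsc_def by (elim conjE) assumption
  assume "X \<in> Ob C" "Y \<in> Ob C" "A \<in> Ob L" "B \<in> Ob L" "fu \<in> ls_hom C L M (X,A) (Y,B)"
  then show ?thesis using ax by blast
qed

lemmas ty = C_id C_comp L_id L_comp trm_Ob tbang prd_Ob pi1 pi2 tpl tunit_Ob tns_Ob tnsm zer bp_Ob bq2 binj2(1-3)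
  Fo_Ob Fm Uo_Ob Um eta mm mminv mone(1-6) nn lam_Ob

end


context gd begin

lemma prdm: "f \<in> Ar C \<Longrightarrow> g \<in> Ar C \<Longrightarrow> prdm C f g \<in> Ar C"
  "f \<in> Ar C \<Longrightarrow> g \<in> Ar C \<Longrightarrow> Dm C (prdm C f g) = prd C (Dm C f) (Dm C g)"
  "f \<in> Ar C \<Longrightarrow> g \<in> Ar C \<Longrightarrow> Cd C (prdm C f g) = prd C (Cd C f) (Cd C g)"
  by (simp_all add: prdm_def ty C_Dm_Ob C_Cd_Ob)

lemma diag: "X \<in> Ob C \<Longrightarrow> diag C X \<in> Ar C" "X \<in> Ob C \<Longrightarrow> Dm C (diag C X) = X"
  "X \<in> Ob C \<Longrightarrow> Cd C (diag C X) = prd C X X"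
  by (simp_all add: diag_def ty)

lemmas ty2 = ty prdm diag C_Dm_Ob C_Cd_Ob L_Dm_Ob L_Cd_Ob

lemma tpl_comp: "h \<in> Ar C \<Longrightarrow> f \<in> Ar C \<Longrightarrow> g \<in> Ar C \<Longrightarrow> Cd C h = Dm C f \<Longrightarrow> Dm C f = Dm C g \<Longrightarrow>
  Cp C h (tpl C f g) = tpl C (Cp C h f) (Cp C h g)"
proof -
  assume a: "h \<in> Ar C" "f \<in> Ar C" "g \<in> Ar C" "Cd C h = Dm C f" "Dm C f = Dm C g"
  have "Cp C h (tpl C f g) = tpl C (Cp C (Cp C h (tpl C f g)) (pi1 C (Cd C f) (Cd C g)))
                                    (Cp C (Cp C h (tpl C f g)) (pi2 C (Cd C f) (Cd C g)))"
    by (rule tpl_eta) (use a in \<open>simp_all add: ty2\<close>)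
  also have "\<dots> = tpl C (Cp C h f) (Cp C h g)"
    using a by (simp add: C_assoc ty2 tpl_pi1 tpl_pi2)
  finally show ?thesis .
qed

lemma tpl_prdm: "a \<in> Ar C \<Longrightarrow> b \<in> Ar C \<Longrightarrow> f \<in> Ar C \<Longrightarrow> g \<in> Ar C \<Longrightarrow> Dm C a = Dm C b \<Longrightarrow>
  Cd C a = Dm C f \<Longrightarrow> Cd C b = Dm C g \<Longrightarrow> Cp C (tpl C a b) (prdm C f g) = tpl C (Cp C a f) (Cp C b g)"
  unfolding prdm_def
  by (subst tpl_comp) (simp_all add: ty2 C_assoc[symmetric] tpl_pi1 tpl_pi2)

lemma tbang_nat: "f \<in> Ar C \<Longrightarrow> Cp C f (tbang C (Cd C f)) = tbang C (Dm C f)"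
  by (rule tbang_uniq) (simp_all add: ty2)

lemma diag_nat: "f \<in> Ar C \<Longrightarrow> Cp C (diag C (Dm C f)) (prdm C f f) = Cp C f (diag C (Cd C f))"
  unfolding diag_def
  by (simp add: tpl_prdm tpl_comp ty2 C_idl C_idr)

lemma diag_coassoc: "X \<in> Ob C \<Longrightarrow>
  Cp C (diag C X) (prdm C (diag C X) (idm C X)) = Cp C (diag C X) (prdm C (idm C X) (diag C X))"
proof -
  assume X: "X \<in> Ob C"
  let ?h = "tpl C (diag C X) (idm C X)"
  have l: "Cp C (diag C X) (prdm C (diag C X) (idm C X)) = ?h"
    using X unfolding diag_def[of C X, symmetric] by (simp add: diag_def tpl_prdm ty2 C_idl)
  have r: "Cp C (diag C X) (prdm C (idm C X) (diag C X)) = tpl C (idm C X) (diag C X)"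
    using X unfolding diag_def[of C X, symmetric] by (simp add: diag_def tpl_prdm ty2 C_idl)
  have h: "?h \<in> Ar C" "Dm C ?h = X" "Cd C ?h = prd C (prd C X X) X" using X by (simp_all add: ty2)
  have "?h = Cp C ?h (idm C (prd C X (prd C X X)))"
    using X h by (simp add: C_idr prd_assoc)
  also have "\<dots> = Cp C ?h (tpl C (Cp C (pi1 C (prd C X X) X) (pi1 C X X))
              (tpl C (Cp C (pi1 C (prd C X X) X) (pi2 C X X)) (pi2 C (prd C X X) X)))"
    using X by (simp add: alpha_id)
  also have "\<dots> = tpl C (idm C X) (diag C X)"
    using X h by (simp add: tpl_comp ty2 C_assoc[symmetric] tpl_pi1 tpl_pi2 diag_def)
  finally show ?thesis using l r by simp
qed

lemma diag_counit: "X \<in> Ob C \<Longrightarrow> Cp C (diag C X) (prdm C (tbang C X) (idm C X)) = idm C X"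
  "X \<in> Ob C \<Longrightarrow> Cp C (diag C X) (prdm C (idm C X) (tbang C X)) = idm C X"
proof -
  assume X: "X \<in> Ob C"
  have "Cp C (diag C X) (prdm C (tbang C X) (idm C X)) = tpl C (tbang C X) (idm C X)"
    using X by (simp add: diag_def tpl_prdm ty2 C_idl)
  also have "\<dots> = Cp C (tpl C (tbang C X) (idm C X)) (pi2 C (trm C) X)"
    using X by (simp add: prd_unit C_idr ty2)
  also have "\<dots> = idm C X" using X by (intro tpl_pi2) (simp_all add: ty2)
  finally show "Cp C (diag C X) (prdm C (tbang C X) (idm C X)) = idm C X" .
  have "Cp C (diag C X) (prdm C (idm C X) (tbang C X)) = tpl C (idm C X) (tbang C X)"
    using X by (simp add: diag_def tpl_prdm ty2 C_idl)
  also have "\<dots> = Cp C (tpl C (idm C X) (tbang C X)) (pi1 C X (trm C))"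
    using X by (simp add: prd_unit C_idr ty2)
  also have "\<dots> = idm C X" using X by (intro tpl_pi1) (simp_all add: ty2)
  finally show "Cp C (diag C X) (prdm C (idm C X) (tbang C X)) = idm C X" .
qed

end


context gd begin

lemma mm_inv': "X \<in> Ob C \<Longrightarrow> Y \<in> Ob C \<Longrightarrow> k \<in> Ar L \<Longrightarrow> Dm L k = tns L (Fo M X) (Fo M Y) \<Longrightarrow>
   Cp L (mm M X Y) (Cp L (mminv M X Y) k) = k"
  "X \<in> Ob C \<Longrightarrow> Y \<in> Ob C \<Longrightarrow> k \<in> Ar L \<Longrightarrow> Dm L k = Fo M (prd C X Y) \<Longrightarrow>
   Cp L (mminv M X Y) (Cp L (mm M X Y) k) = k"
  by (simp_all add: L_assoc[symmetric] ty2 mm_inv L_idl)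

lemma mminv_nat: "f \<in> Ar C \<Longrightarrow> g \<in> Ar C \<Longrightarrow>
  Cp L (mminv M (Dm C f) (Dm C g)) (tnsm L (Fm M f) (Fm M g)) = Cp L (Fm M (prdm C f g)) (mminv M (Cd C f) (Cd C g))"
proof -
  assume a: "f \<in> Ar C" "g \<in> Ar C"
  have "Cp L (mminv M (Dm C f) (Dm C g)) (tnsm L (Fm M f) (Fm M g))
      = Cp L (mminv M (Dm C f) (Dm C g)) (Cp L (tnsm L (Fm M f) (Fm M g)) (Cp L (mm M (Cd C f) (Cd C g)) (mminv M (Cd C f) (Cd C g))))"
    using a by (simp add: mm_inv ty2 L_idr)
  also have "\<dots> = Cp L (mminv M (Dm C f) (Dm C g)) (Cp L (Cp L (tnsm L (Fm M f) (Fm M g)) (mm M (Cd C f) (Cd C g))) (mminv M (Cd C f) (Cd C g)))"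
    using a by (simp add: L_assoc ty2)
  also have "\<dots> = Cp L (mminv M (Dm C f) (Dm C g)) (Cp L (Cp L (mm M (Dm C f) (Dm C g)) (Fm M (prdm C f g))) (mminv M (Cd C f) (Cd C g)))"
    using a by (simp add: mm_nat)
  also have "\<dots> = Cp L (Fm M (prdm C f g)) (mminv M (Cd C f) (Cd C g))"
    using a by (simp add: L_assoc ty2 mm_inv')
  finally show ?thesis .
qed

lemma mminv_assoc: "X \<in> Ob C \<Longrightarrow> Y \<in> Ob C \<Longrightarrow> Z \<in> Ob C \<Longrightarrow>
  Cp L (mminv M (prd C X Y) Z) (tnsm L (mminv M X Y) (idm L (Fo M Z)))
   = Cp L (mminv M X (prd C Y Z)) (tnsm L (idm L (Fo M X)) (mminv M Y Z))"
proof -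
  assume o: "X \<in> Ob C" "Y \<in> Ob C" "Z \<in> Ob C"
  let ?P = "Cp L (tnsm L (mm M X Y) (idm L (Fo M Z))) (mm M (prd C X Y) Z)"
  let ?P' = "Cp L (tnsm L (idm L (Fo M X)) (mm M Y Z)) (mm M X (prd C Y Z))"
  let ?l = "Cp L (mminv M (prd C X Y) Z) (tnsm L (mminv M X Y) (idm L (Fo M Z)))"
  let ?r = "Cp L (mminv M X (prd C Y Z)) (tnsm L (idm L (Fo M X)) (mminv M Y Z))"
  have e: "?P = ?P'" using o by (rule mm_assoc)
  have lP: "Cp L ?l ?P = idm L (Fo M (prd C (prd C X Y) Z))"
  proof -
    have "Cp L ?l ?P = Cp L (mminv M (prd C X Y) Z) (Cp L (Cp L (tnsm L (mminv M X Y) (idm L (Fo M Z))) (tnsm L (mm M X Y) (idm L (Fo M Z)))) (mm M (prd C X Y) Z))"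
      using o by (simp add: L_assoc ty2)
    also have "\<dots> = Cp L (mminv M (prd C X Y) Z) (Cp L (tnsm L (Cp L (mminv M X Y) (mm M X Y)) (Cp L (idm L (Fo M Z)) (idm L (Fo M Z)))) (mm M (prd C X Y) Z))"
      using o by (simp add: interchange ty2)
    also have "\<dots> = idm L (Fo M (prd C (prd C X Y) Z))"
      using o by (simp add: mm_inv ty2 L_idl tnsm_id mm_inv)
    finally show ?thesis .
  qed
  have Pr: "Cp L ?P' ?r = idm L (tns L (Fo M X) (tns L (Fo M Y) (Fo M Z)))"
  proof -
    have "Cp L ?P' ?r = Cp L (tnsm L (idm L (Fo M X)) (mm M Y Z)) (tnsm L (idm L (Fo M X)) (mminv M Y Z))"
      using o by (simp add: L_assoc ty2 mm_inv')
    also have "\<dots> = tnsm L (Cp L (idm L (Fo M X)) (idm L (Fo M X))) (Cp L (mm M Y Z) (mminv M Y Z))"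
      using o by (simp add: interchange ty2)
    also have "\<dots> = idm L (tns L (Fo M X) (tns L (Fo M Y) (Fo M Z)))"
      using o by (simp add: mm_inv ty2 L_idl tnsm_id)
    finally show ?thesis .
  qed
  have "?l = Cp L ?l (Cp L ?P' ?r)"
    using o by (simp add: Pr ty2 L_idr tns_assoc)
  also have "\<dots> = Cp L (Cp L ?l ?P) ?r"
    unfolding e[symmetric] using o by (simp add: L_assoc ty2 tns_assoc prd_assoc)
  also have "\<dots> = ?r" using o by (simp add: lP ty2 L_idl prd_assoc)
  finally show ?thesis .
qed

lemma mminv_unit: "X \<in> Ob C \<Longrightarrow> mminv M (trm C) X = tnsm L (mone M) (idm L (Fo M X))"
   "X \<in> Ob C \<Longrightarrow> mminv M X (trm C) = tnsm L (idm L (Fo M X)) (mone M)"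
proof -
  assume o: "X \<in> Ob C"
  have "tnsm L (mone M) (idm L (Fo M X)) = Cp L (tnsm L (mone M) (idm L (Fo M X))) (Cp L (mm M (trm C) X) (mminv M (trm C) X))"
    using o by (simp add: mm_inv ty2 L_idr)
  also have "\<dots> = mminv M (trm C) X"
    using o by (simp add: L_assoc[symmetric] mm_unit ty2 L_idl prd_unit tns_unit)
  finally show "mminv M (trm C) X = tnsm L (mone M) (idm L (Fo M X))" by simp
  have "tnsm L (idm L (Fo M X)) (mone M) = Cp L (tnsm L (idm L (Fo M X)) (mone M)) (Cp L (mm M X (trm C)) (mminv M X (trm C)))"
    using o by (simp add: mm_inv ty2 L_idr)
  also have "\<dots> = mminv M X (trm C)"
    using o by (simp add: L_assoc[symmetric] mm_unit ty2 L_idl prd_unit tns_unit)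
  finally show "mminv M X (trm C) = tnsm L (idm L (Fo M X)) (mone M)" by simp
qed

end


context gd begin

lemma cpy: "X \<in> Ob C \<Longrightarrow> cpy C L M X \<in> Ar L" "X \<in> Ob C \<Longrightarrow> Dm L (cpy C L M X) = Fo M X"
  "X \<in> Ob C \<Longrightarrow> Cd L (cpy C L M X) = tns L (Fo M X) (Fo M X)"
  by (simp_all add: cpy_def ty2)
lemma wkn: "X \<in> Ob C \<Longrightarrow> wkn C L M X \<in> Ar L" "X \<in> Ob C \<Longrightarrow> Dm L (wkn C L M X) = Fo M X"
  "X \<in> Ob C \<Longrightarrow> Cd L (wkn C L M X) = tunit L"
  by (simp_all add: wkn_def ty2)

lemmas ty3 = ty2 cpy wkn

lemma cpy_nat: "f \<in> Ar C \<Longrightarrow>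
  Cp L (Fm M f) (cpy C L M (Cd C f)) = Cp L (cpy C L M (Dm C f)) (tnsm L (Fm M f) (Fm M f))"
proof -
  assume f: "f \<in> Ar C"
  have "Cp L (cpy C L M (Dm C f)) (tnsm L (Fm M f) (Fm M f))
     = Cp L (Fm M (diag C (Dm C f))) (Cp L (mminv M (Dm C f) (Dm C f)) (tnsm L (Fm M f) (Fm M f)))"
    using f by (simp add: cpy_def L_assoc ty3)
  also have "\<dots> = Cp L (Fm M (diag C (Dm C f))) (Cp L (Fm M (prdm C f f)) (mminv M (Cd C f) (Cd C f)))"
    using f by (simp add: mminv_nat)
  also have "\<dots> = Cp L (Fm M (Cp C (diag C (Dm C f)) (prdm C f f))) (mminv M (Cd C f) (Cd C f))"
    using f by (simp add: L_assoc[symmetric] Fm_comp ty3)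
  also have "\<dots> = Cp L (Fm M (Cp C f (diag C (Cd C f)))) (mminv M (Cd C f) (Cd C f))"
    using f by (simp add: diag_nat)
  also have "\<dots> = Cp L (Fm M f) (cpy C L M (Cd C f))"
    using f by (simp add: L_assoc Fm_comp ty3 cpy_def)
  finally show ?thesis by simp
qed

lemma wkn_nat: "f \<in> Ar C \<Longrightarrow> Cp L (Fm M f) (wkn C L M (Cd C f)) = wkn C L M (Dm C f)"
proof -
  assume f: "f \<in> Ar C"
  have "Cp L (Fm M f) (wkn C L M (Cd C f)) = Cp L (Fm M (Cp C f (tbang C (Cd C f)))) (moneinv M)"
    using f by (simp add: wkn_def L_assoc[symmetric] Fm_comp ty3)
  also have "\<dots> = wkn C L M (Dm C f)" using f by (simp add: tbang_nat wkn_def)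
  finally show ?thesis .
qed

lemma cpy_coassoc: "X \<in> Ob C \<Longrightarrow>
  Cp L (cpy C L M X) (tnsm L (cpy C L M X) (idm L (Fo M X))) = Cp L (cpy C L M X) (tnsm L (idm L (Fo M X)) (cpy C L M X))"
proof -
  assume X: "X \<in> Ob C"
  have l1: "tnsm L (cpy C L M X) (idm L (Fo M X)) = Cp L (tnsm L (Fm M (diag C X)) (Fm M (idm C X))) (tnsm L (mminv M X X) (idm L (Fo M X)))"
    using X by (simp add: cpy_def interchange[symmetric] ty3 Fm_id L_idl)
  have r1: "tnsm L (idm L (Fo M X)) (cpy C L M X) = Cp L (tnsm L (Fm M (idm C X)) (Fm M (diag C X))) (tnsm L (idm L (Fo M X)) (mminv M X X))"
    using X by (simp add: cpy_def interchange[symmetric] ty3 Fm_id L_idl)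
  have "Cp L (cpy C L M X) (tnsm L (cpy C L M X) (idm L (Fo M X)))
    = Cp L (Fm M (diag C X)) (Cp L (Cp L (mminv M X X) (tnsm L (Fm M (diag C X)) (Fm M (idm C X)))) (tnsm L (mminv M X X) (idm L (Fo M X))))"
    unfolding l1 using X by (simp add: cpy_def L_assoc ty3)
  also have "\<dots> = Cp L (Fm M (diag C X)) (Cp L (Cp L (Fm M (prdm C (diag C X) (idm C X))) (mminv M (prd C X X) X)) (tnsm L (mminv M X X) (idm L (Fo M X))))"
    using mminv_nat[of "diag C X" "idm C X"] X by (simp add: ty3)
  also have "\<dots> = Cp L (Fm M (Cp C (diag C X) (prdm C (diag C X) (idm C X)))) (Cp L (mminv M (prd C X X) X) (tnsm L (mminv M X X) (idm L (Fo M X))))"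
    using X by (simp add: L_assoc Fm_comp ty3)
  also have "\<dots> = Cp L (Fm M (Cp C (diag C X) (prdm C (idm C X) (diag C X)))) (Cp L (mminv M X (prd C X X)) (tnsm L (idm L (Fo M X)) (mminv M X X)))"
    using X by (simp add: diag_coassoc mminv_assoc)
  also have "\<dots> = Cp L (Fm M (diag C X)) (Cp L (Cp L (Fm M (prdm C (idm C X) (diag C X))) (mminv M X (prd C X X))) (tnsm L (idm L (Fo M X)) (mminv M X X)))"
    using X by (simp add: L_assoc Fm_comp ty3)
  also have "\<dots> = Cp L (Fm M (diag C X)) (Cp L (Cp L (mminv M X X) (tnsm L (Fm M (idm C X)) (Fm M (diag C X)))) (tnsm L (idm L (Fo M X)) (mminv M X X)))"
    using mminv_nat[of "idm C X" "diag C X"] X by (simp add: ty3)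
  also have "\<dots> = Cp L (cpy C L M X) (tnsm L (idm L (Fo M X)) (cpy C L M X))"
    unfolding r1 using X by (simp add: cpy_def L_assoc ty3)
  finally show ?thesis .
qed

lemma cpy_counit: "X \<in> Ob C \<Longrightarrow> Cp L (cpy C L M X) (tnsm L (wkn C L M X) (idm L (Fo M X))) = idm L (Fo M X)"
  "X \<in> Ob C \<Longrightarrow> Cp L (cpy C L M X) (tnsm L (idm L (Fo M X)) (wkn C L M X)) = idm L (Fo M X)"
proof -
  assume X: "X \<in> Ob C"
  have l1: "tnsm L (wkn C L M X) (idm L (Fo M X)) = Cp L (tnsm L (Fm M (tbang C X)) (Fm M (idm C X))) (tnsm L (moneinv M) (idm L (Fo M X)))"
    using X by (simp add: wkn_def interchange[symmetric] ty3 Fm_id L_idl)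
  have "Cp L (cpy C L M X) (tnsm L (wkn C L M X) (idm L (Fo M X)))
    = Cp L (Fm M (diag C X)) (Cp L (Cp L (mminv M X X) (tnsm L (Fm M (tbang C X)) (Fm M (idm C X)))) (tnsm L (moneinv M) (idm L (Fo M X))))"
    unfolding l1 using X by (simp add: cpy_def L_assoc ty3)
  also have "\<dots> = Cp L (Fm M (diag C X)) (Cp L (Cp L (Fm M (prdm C (tbang C X) (idm C X))) (mminv M (trm C) X)) (tnsm L (moneinv M) (idm L (Fo M X))))"
    using mminv_nat[of "tbang C X" "idm C X"] X by (simp add: ty3)
  also have "\<dots> = Cp L (Fm M (Cp C (diag C X) (prdm C (tbang C X) (idm C X)))) (Cp L (mminv M (trm C) X) (tnsm L (moneinv M) (idm L (Fo M X))))"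
    using X by (simp add: L_assoc Fm_comp ty3)
  also have "\<dots> = Cp L (Fm M (idm C X)) (tnsm L (Cp L (mone M) (moneinv M)) (Cp L (idm L (Fo M X)) (idm L (Fo M X))))"
    using X by (simp add: diag_counit mminv_unit interchange ty3)
  also have "\<dots> = idm L (Fo M X)"
    using X by (simp add: mone Fm_id ty3 L_idl tnsm_id tns_unit)
  finally show "Cp L (cpy C L M X) (tnsm L (wkn C L M X) (idm L (Fo M X))) = idm L (Fo M X)" .
  have r1: "tnsm L (idm L (Fo M X)) (wkn C L M X) = Cp L (tnsm L (Fm M (idm C X)) (Fm M (tbang C X))) (tnsm L (idm L (Fo M X)) (moneinv M))"
    using X by (simp add: wkn_def interchange[symmetric] ty3 Fm_id L_idl)
  have "Cp L (cpy C L M X) (tnsm L (idm L (Fo M X)) (wkn C L M X))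
    = Cp L (Fm M (diag C X)) (Cp L (Cp L (mminv M X X) (tnsm L (Fm M (idm C X)) (Fm M (tbang C X)))) (tnsm L (idm L (Fo M X)) (moneinv M)))"
    unfolding r1 using X by (simp add: cpy_def L_assoc ty3)
  also have "\<dots> = Cp L (Fm M (diag C X)) (Cp L (Cp L (Fm M (prdm C (idm C X) (tbang C X))) (mminv M X (trm C))) (tnsm L (idm L (Fo M X)) (moneinv M)))"
    using mminv_nat[of "idm C X" "tbang C X"] X by (simp add: ty3)
  also have "\<dots> = Cp L (Fm M (Cp C (diag C X) (prdm C (idm C X) (tbang C X)))) (Cp L (mminv M X (trm C)) (tnsm L (idm L (Fo M X)) (moneinv M)))"
    using X by (simp add: L_assoc Fm_comp ty3)
  also have "\<dots> = Cp L (Fm M (idm C X)) (tnsm L (Cp L (idm L (Fo M X)) (idm L (Fo M X))) (Cp L (mone M) (moneinv M)))"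
    using X by (simp add: diag_counit mminv_unit interchange ty3)
  also have "\<dots> = idm L (Fo M X)"
    using X by (simp add: mone Fm_id ty3 L_idl tnsm_id tns_unit)
  finally show "Cp L (cpy C L M X) (tnsm L (idm L (Fo M X)) (wkn C L M X)) = idm L (Fo M X)" .
qed

end


context gd begin

lemma tq1: "a \<in> Ar L \<Longrightarrow> b \<in> Ar L \<Longrightarrow> Cd L a = Dm L b \<Longrightarrow> E \<in> Ob L \<Longrightarrow>
  Cp L (tnsm L a (idm L E)) (tnsm L b (idm L E)) = tnsm L (Cp L a b) (idm L E)"
  by (simp add: interchange[symmetric] ty3 L_idl)
lemma tq2: "a \<in> Ar L \<Longrightarrow> b \<in> Ar L \<Longrightarrow> Cd L a = Dm L b \<Longrightarrow> E \<in> Ob L \<Longrightarrow>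
  Cp L (tnsm L (idm L E) a) (tnsm L (idm L E) b) = tnsm L (idm L E) (Cp L a b)"
  by (simp add: interchange[symmetric] ty3 L_idl)
lemma tq3: "a \<in> Ar L \<Longrightarrow> b \<in> Ar L \<Longrightarrow> Dm L a = E \<Longrightarrow> Cd L a = Dm L b \<Longrightarrow> E \<in> Ob L \<Longrightarrow> h \<in> Ar L \<Longrightarrow>
  Cp L (tnsm L (idm L (Dm L h)) a) (tnsm L h b) = tnsm L h (Cp L a b)"
  by (simp add: interchange[symmetric] ty3 L_idl)

lemma ls_assoc_snd:
  assumes o: "X \<in> Ob C" "Y \<in> Ob C" "Z \<in> Ob C" "A \<in> Ob L" "B \<in> Ob L" "D \<in> Ob L"
    and f: "f \<in> Ar C" "Dm C f = X" "Cd C f = Y" and g: "g \<in> Ar C" "Dm C g = Y" "Cd C g = Z"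
    and u: "u \<in> Ar L" "Dm L u = tns L (Fo M X) A" "Cd L u = B"
    and v: "v \<in> Ar L" "Dm L v = tns L (Fo M Y) B" "Cd L v = D"
  shows "Cp L (tnsm L (cpy C L M X) (idm L A)) (tnsm L (Fm M (Cp C f g)) (Cp L (Cp L (tnsm L (cpy C L M X) (idm L A)) (tnsm L (Fm M f) u)) v))
    = Cp L (Cp L (Cp L (tnsm L (cpy C L M X) (idm L A)) (tnsm L (Fm M f) u)) (tnsm L (cpy C L M Y) (idm L B))) (tnsm L (Fm M g) v)"
proof -
  let ?c = "cpy C L M X" and ?FX = "Fo M X" and ?i = "idm L (Fo M X)"
  note simps = o f g u v ty3 tns_assoc
  have E1: "tnsm L (Fm M (Cp C f g)) (Cp L (Cp L (tnsm L ?c (idm L A)) (tnsm L (Fm M f) u)) v)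
     = Cp L (tnsm L ?i (Cp L (tnsm L ?c (idm L A)) (tnsm L (Fm M f) u))) (tnsm L (Fm M (Cp C f g)) v)"
    using tq3[of "Cp L (tnsm L ?c (idm L A)) (tnsm L (Fm M f) u)" v "tns L ?FX A" "Fm M (Cp C f g)"]
    by (simp add: simps)
  have E2: "tnsm L ?i (Cp L (tnsm L ?c (idm L A)) (tnsm L (Fm M f) u))
     = Cp L (tnsm L (tnsm L ?i ?c) (idm L A)) (tnsm L ?i (tnsm L (Fm M f) u))"
    by (simp add: tq2[symmetric] tnsm_assoc simps)
  have E4: "Cp L (tnsm L ?c (idm L A)) (tnsm L (tnsm L ?i ?c) (idm L A)) = tnsm L (Cp L ?c (tnsm L ?i ?c)) (idm L A)"
    by (simp add: tq1 simps)
  have LHS: "Cp L (tnsm L ?c (idm L A)) (tnsm L (Fm M (Cp C f g)) (Cp L (Cp L (tnsm L ?c (idm L A)) (tnsm L (Fm M f) u)) v))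
     = Cp L (Cp L (tnsm L (Cp L ?c (tnsm L ?i ?c)) (idm L A)) (tnsm L ?i (tnsm L (Fm M f) u))) (tnsm L (Fm M (Cp C f g)) v)"
    unfolding E1 E2 E4[symmetric] by (simp add: L_assoc simps)
  have G1: "Cp L (tnsm L (Fm M f) u) (tnsm L (cpy C L M Y) (idm L B))
      = Cp L (tnsm L (tnsm L ?c ?i) (idm L A)) (tnsm L (tnsm L (Fm M f) (Fm M f)) u)"
  proof -
    have "Cp L (tnsm L (Fm M f) u) (tnsm L (cpy C L M Y) (idm L B)) = tnsm L (Cp L (Fm M f) (cpy C L M Y)) u"
      by (simp add: interchange[symmetric] simps L_idr)
    also have "\<dots> = tnsm L (Cp L ?c (tnsm L (Fm M f) (Fm M f))) u"
      using cpy_nat[of f] by (simp add: simps)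
    also have "\<dots> = Cp L (tnsm L ?c (idm L (tns L ?FX A))) (tnsm L (tnsm L (Fm M f) (Fm M f)) u)"
      by (simp add: interchange[symmetric] simps L_idl)
    also have "\<dots> = Cp L (tnsm L (tnsm L ?c ?i) (idm L A)) (tnsm L (tnsm L (Fm M f) (Fm M f)) u)"
      by (simp add: tnsm_id[symmetric] tnsm_assoc simps)
    finally show ?thesis .
  qed
  have G2: "Cp L (tnsm L (tnsm L (Fm M f) (Fm M f)) u) (tnsm L (Fm M g) v)
     = Cp L (tnsm L ?i (tnsm L (Fm M f) u)) (tnsm L (Fm M (Cp C f g)) v)"
  proof -
    have "Cp L (tnsm L (tnsm L (Fm M f) (Fm M f)) u) (tnsm L (Fm M g) v) = tnsm L (Cp L (Fm M f) (Fm M g)) (Cp L (tnsm L (Fm M f) u) v)"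
      by (simp add: tnsm_assoc interchange simps)
    also have "\<dots> = Cp L (tnsm L ?i (tnsm L (Fm M f) u)) (tnsm L (Fm M (Cp C f g)) v)"
      using tq3[of "tnsm L (Fm M f) u" v "tns L ?FX (tns L ?FX A)" "Fm M (Cp C f g)"]
      by (simp add: simps Fm_comp)
    finally show ?thesis .
  qed
  have G3: "Cp L (tnsm L ?c (idm L A)) (tnsm L (tnsm L ?c ?i) (idm L A)) = tnsm L (Cp L ?c (tnsm L ?c ?i)) (idm L A)"
    by (simp add: tq1 simps)
  have RHS: "Cp L (Cp L (Cp L (tnsm L ?c (idm L A)) (tnsm L (Fm M f) u)) (tnsm L (cpy C L M Y) (idm L B))) (tnsm L (Fm M g) v)
     = Cp L (Cp L (tnsm L (Cp L ?c (tnsm L ?c ?i)) (idm L A)) (tnsm L ?i (tnsm L (Fm M f) u))) (tnsm L (Fm M (Cp C f g)) v)"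
  proof -
    have "Cp L (Cp L (Cp L (tnsm L ?c (idm L A)) (tnsm L (Fm M f) u)) (tnsm L (cpy C L M Y) (idm L B))) (tnsm L (Fm M g) v)
      = Cp L (tnsm L ?c (idm L A)) (Cp L (Cp L (tnsm L (Fm M f) u) (tnsm L (cpy C L M Y) (idm L B))) (tnsm L (Fm M g) v))"
      by (simp add: L_assoc simps)
    also have "\<dots> = Cp L (tnsm L ?c (idm L A)) (Cp L (tnsm L (tnsm L ?c ?i) (idm L A)) (Cp L (tnsm L (tnsm L (Fm M f) (Fm M f)) u) (tnsm L (Fm M g) v)))"
      unfolding G1 by (simp add: L_assoc simps)
    also have "\<dots> = Cp L (Cp L (tnsm L (Cp L ?c (tnsm L ?c ?i)) (idm L A)) (tnsm L ?i (tnsm L (Fm M f) u))) (tnsm L (Fm M (Cp C f g)) v)"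
      unfolding G2 G3[symmetric] by (simp add: L_assoc simps)
    finally show ?thesis .
  qed
  show ?thesis unfolding LHS RHS using cpy_coassoc[OF o(1)] by simp
qed

end


context gd begin

lemma ls_hom_iff: "(f,u) \<in> ls_hom C L M (X,A) (Y,B) \<longleftrightarrow>
  f \<in> Ar C \<and> Dm C f = X \<and> Cd C f = Y \<and> u \<in> Ar L \<and> Dm L u = tns L (Fo M X) A \<and> Cd L u = B"
  by (auto simp: ls_hom_def hom_def)

lemma H1: "Z \<in> Ob C \<Longrightarrow> E \<in> Ob L \<Longrightarrow> k \<in> Ar L \<Longrightarrow> Dm L k = tns L (Fo M Z) E \<Longrightarrow>
  Cp L (tnsm L (cpy C L M Z) (idm L E)) (tnsm L (wkn C L M Z) k) = k"
proof -
  assume a: "Z \<in> Ob C" "E \<in> Ob L" "k \<in> Ar L" "Dm L k = tns L (Fo M Z) E"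
  have "tnsm L (wkn C L M Z) k = tnsm L (Cp L (wkn C L M Z) (idm L (tunit L))) (Cp L (idm L (tns L (Fo M Z) E)) k)"
    using a by (simp add: ty3 L_idl L_idr)
  also have "\<dots> = Cp L (tnsm L (tnsm L (wkn C L M Z) (idm L (Fo M Z))) (idm L E)) k"
    using a by (simp add: interchange ty3 tnsm_unit tnsm_assoc tnsm_id[symmetric])
  finally have "Cp L (tnsm L (cpy C L M Z) (idm L E)) (tnsm L (wkn C L M Z) k)
     = Cp L (Cp L (tnsm L (cpy C L M Z) (idm L E)) (tnsm L (tnsm L (wkn C L M Z) (idm L (Fo M Z))) (idm L E))) k"
    using a by (simp add: L_assoc ty3 tns_assoc tns_unit)
  also have "\<dots> = k" using a by (simp add: tq1 ty3 cpy_counit tnsm_id L_idl tns_unit)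
  finally show ?thesis .
qed

lemma ls_comp_hom: "fu \<in> ls_hom C L M (X,A) (Y,B) \<Longrightarrow> gv \<in> ls_hom C L M (Y,B) (Z,D) \<Longrightarrow> A \<in> Ob L \<Longrightarrow>
  ls_comp C L M A fu gv \<in> ls_hom C L M (X,A) (Z,D)"
  by (cases fu; cases gv) (auto simp: ls_hom_iff ls_comp_def ty3 tns_assoc)

lemma ls_assoc: "fu \<in> ls_hom C L M (X,A) (Y,B) \<Longrightarrow> gv \<in> ls_hom C L M (Y,B) (Z,D) \<Longrightarrow>
  hw \<in> ls_hom C L M (Z,D) (V,E) \<Longrightarrow> A \<in> Ob L \<Longrightarrow> B \<in> Ob L \<Longrightarrow> D \<in> Ob L \<Longrightarrow>
  ls_comp C L M A (ls_comp C L M A fu gv) hw = ls_comp C L M A fu (ls_comp C L M B gv hw)"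
proof -
  assume a: "fu \<in> ls_hom C L M (X,A) (Y,B)" "gv \<in> ls_hom C L M (Y,B) (Z,D)"
     "hw \<in> ls_hom C L M (Z,D) (V,E)" "A \<in> Ob L" "B \<in> Ob L" "D \<in> Ob L"
  obtain f u g v h w where e: "fu = (f,u)" "gv = (g,v)" "hw = (h,w)" by (cases fu; cases gv; cases hw) auto
  have t: "f \<in> Ar C" "Dm C f = X" "Cd C f = Y" "u \<in> Ar L" "Dm L u = tns L (Fo M X) A" "Cd L u = B"
     "g \<in> Ar C" "Dm C g = Y" "Cd C g = Z" "v \<in> Ar L" "Dm L v = tns L (Fo M Y) B" "Cd L v = D"
     "h \<in> Ar C" "Dm C h = Z" "Cd C h = V" "w \<in> Ar L" "Dm L w = tns L (Fo M Z) D" "Cd L w = E"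
    using a unfolding e ls_hom_iff by auto
  have o: "X \<in> Ob C" "Y \<in> Ob C" "Z \<in> Ob C" using t ty3 by metis+
  have s: "Cp L (tnsm L (cpy C L M X) (idm L A)) (tnsm L (Fm M (Cp C f g)) (Cp L (Cp L (tnsm L (cpy C L M X) (idm L A)) (tnsm L (Fm M f) u)) v))
    = Cp L (Cp L (Cp L (tnsm L (cpy C L M X) (idm L A)) (tnsm L (Fm M f) u)) (tnsm L (cpy C L M Y) (idm L B))) (tnsm L (Fm M g) v)"
    by (rule ls_assoc_snd) (use o t a in auto)
  show ?thesis unfolding e ls_comp_def
    using t o a by (simp add: C_assoc ty3 tns_assoc L_assoc[symmetric] s)
qed

lemma ls_idl: "fu \<in> ls_hom C L M (X,A) (Y,B) \<Longrightarrow> A \<in> Ob L \<Longrightarrow> ls_comp C L M A (ls_id C L M X A) fu = fu"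
proof -
  assume a: "fu \<in> ls_hom C L M (X,A) (Y,B)" "A \<in> Ob L"
  obtain f u where e: "fu = (f,u)" by (cases fu) auto
  have t: "f \<in> Ar C" "Dm C f = X" "Cd C f = Y" "u \<in> Ar L" "Dm L u = tns L (Fo M X) A" "Cd L u = B"
    using a unfolding e ls_hom_iff by auto
  have o: "X \<in> Ob C" using t ty3 by metis
  have "Cp L (tnsm L (cpy C L M X) (idm L A)) (tnsm L (Fm M (idm C X)) (tnsm L (wkn C L M X) (idm L A)))
     = tnsm L (Cp L (cpy C L M X) (tnsm L (idm L (Fo M X)) (wkn C L M X))) (idm L A)"
    using o a by (simp add: Fm_id tnsm_assoc[symmetric] tq1 ty3)
  also have "\<dots> = idm L (tns L (Fo M X) A)" using o a by (simp add: cpy_counit tnsm_id ty3)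
  finally show ?thesis unfolding e ls_comp_def ls_id_def using t o a
    by (simp add: C_idl ty3 L_idl)
qed

lemma ls_idr: "fu \<in> ls_hom C L M (X,A) (Y,B) \<Longrightarrow> A \<in> Ob L \<Longrightarrow> B \<in> Ob L \<Longrightarrow> ls_comp C L M A fu (ls_id C L M Y B) = fu"
proof -
  assume a: "fu \<in> ls_hom C L M (X,A) (Y,B)" "A \<in> Ob L" "B \<in> Ob L"
  obtain f u where e: "fu = (f,u)" by (cases fu) auto
  have t: "f \<in> Ar C" "Dm C f = X" "Cd C f = Y" "u \<in> Ar L" "Dm L u = tns L (Fo M X) A" "Cd L u = B"
    using a unfolding e ls_hom_iff by auto
  have o: "X \<in> Ob C" "Y \<in> Ob C" using t ty3 by metis+
  have "Cp L (tnsm L (Fm M f) u) (tnsm L (wkn C L M Y) (idm L B)) = tnsm L (wkn C L M X) u"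
    using t o a wkn_nat[of f] by (simp add: interchange[symmetric] ty3 L_idr)
  then have "Cp L (Cp L (tnsm L (cpy C L M X) (idm L A)) (tnsm L (Fm M f) u)) (tnsm L (wkn C L M Y) (idm L B)) = u"
    using t o a by (simp add: L_assoc ty3 H1 tns_assoc)
  then show ?thesis unfolding e ls_comp_def ls_id_def using t o a
    by (simp add: C_idr)
qed

lemma ls_inv_eq: "ph \<in> ls_hom C L M (X,A) (Y,B) \<Longrightarrow> qs \<in> ls_hom C L M (Y,B) (X,A) \<Longrightarrow>
  A \<in> Ob L \<Longrightarrow> B \<in> Ob L \<Longrightarrow>
  ls_comp C L M A ph qs = ls_id C L M X A \<Longrightarrow> ls_comp C L M B qs ph = ls_id C L M Y B \<Longrightarrow>
  ls_inv C L M (X,A) (Y,B) ph = qs"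
  unfolding ls_inv_def fst_conv snd_conv
proof (rule the_equality)
  assume a: "ph \<in> ls_hom C L M (X,A) (Y,B)" "qs \<in> ls_hom C L M (Y,B) (X,A)" "A \<in> Ob L" "B \<in> Ob L"
    "ls_comp C L M A ph qs = ls_id C L M X A" "ls_comp C L M B qs ph = ls_id C L M Y B"
  then show "qs \<in> ls_hom C L M (Y,B) (X,A) \<and> ls_comp C L M A ph qs = ls_id C L M X A \<and>
    ls_comp C L M B qs ph = ls_id C L M Y B" by simp
  fix qs' assume b: "qs' \<in> ls_hom C L M (Y,B) (X,A) \<and> ls_comp C L M A ph qs' = ls_id C L M X A \<and>
    ls_comp C L M B qs' ph = ls_id C L M Y B"
  have "qs' = ls_comp C L M B qs' (ls_id C L M X A)" using ls_idr[of "qs'" Y B X A] b a by simp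
  also have "\<dots> = ls_comp C L M B qs' (ls_comp C L M A ph qs)" using a by simp
  also have "\<dots> = ls_comp C L M B (ls_comp C L M B qs' ph) qs" using ls_assoc[of "qs'" Y B X A ph Y B qs X A] a b by simp
  also have "\<dots> = qs" using ls_idl[of qs Y B X A] a b by simp
  finally show "qs' = qs" .
qed

end


context gd begin

lemma btpl_ax: "\<forall>C \<in> Ob L. \<forall>A \<in> Ob L. \<forall>B \<in> Ob L. \<forall>f \<in> hom L C A. \<forall>g \<in> hom L C B.
        btpl L f g \<in> hom L C (bp L A B) \<and>
        Cp L (btpl L f g) (bq1 L A B) = f \<and> Cp L (btpl L f g) (bq2 L A B) = g"
  using addsmc unfolding is_addsmc_def by (elim conjE) assumption

lemma btpl: "f \<in> Ar L \<Longrightarrow> g \<in> Ar L \<Longrightarrow> Dm L f = Dm L g \<Longrightarrow> Cd L f = A \<Longrightarrow> Cd L g = B \<Longrightarrow>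
  btpl L f g \<in> Ar L \<and> Dm L (btpl L f g) = Dm L f \<and> Cd L (btpl L f g) = bp L A B \<and>
  Cp L (btpl L f g) (bq2 L A B) = g"
proof -
  assume a: "f \<in> Ar L" "g \<in> Ar L" "Dm L f = Dm L g" "Cd L f = A" "Cd L g = B"
  have "f \<in> hom L (Dm L f) A" "g \<in> hom L (Dm L f) B" "Dm L f \<in> Ob L" "A \<in> Ob L" "B \<in> Ob L"
    using a by (auto simp: hom_def ty3)
  then show ?thesis using btpl_ax by (auto simp: hom_def)
qed

lemma phi_form: "X \<in> Ob C \<Longrightarrow> Y \<in> Ob C \<Longrightarrow>
  phi C L T X Y = (idm C (prd C X Y), btpl L (snd (T (pi1 C X Y))) (snd (T (pi2 C X Y)))) \<and>
  phi C L T X Y \<in> ls_hom C L M (prd C X Y, lam (prd C X Y)) (prd C X Y, bp L (lam X) (lam Y)) \<and>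
  Cp L (btpl L (snd (T (pi1 C X Y))) (snd (T (pi2 C X Y)))) (bq2 L (lam X) (lam Y)) = snd (T (pi2 C X Y))"
proof -
  assume o: "X \<in> Ob C" "Y \<in> Ob C"
  let ?Q = "prd C X Y"
  have t1: "T (pi1 C X Y) \<in> ls_hom C L M (?Q, lam ?Q) (X, lam X)" using T_hom[of "pi1 C X Y"] o by (simp add: ty3)
  have t2: "T (pi2 C X Y) \<in> ls_hom C L M (?Q, lam ?Q) (Y, lam Y)" using T_hom[of "pi2 C X Y"] o by (simp add: ty3)
  have f1: "fst (T (pi1 C X Y)) = pi1 C X Y" "fst (T (pi2 C X Y)) = pi2 C X Y" using o by (simp_all add: T_fst ty3)
  have id: "tpl C (pi1 C X Y) (pi2 C X Y) = idm C ?Q"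
    using tpl_eta[of "idm C ?Q" X Y] o by (simp add: ty3 C_idl)
  have v: "snd (T (pi1 C X Y)) \<in> Ar L" "Dm L (snd (T (pi1 C X Y))) = tns L (Fo M ?Q) (lam ?Q)" "Cd L (snd (T (pi1 C X Y))) = lam X"
    "snd (T (pi2 C X Y)) \<in> Ar L" "Dm L (snd (T (pi2 C X Y))) = tns L (Fo M ?Q) (lam ?Q)" "Cd L (snd (T (pi2 C X Y))) = lam Y"
    using t1 t2 by (auto simp: ls_hom_def hom_def)
  have b: "btpl L (snd (T (pi1 C X Y))) (snd (T (pi2 C X Y))) \<in> Ar L \<and> Dm L (btpl L (snd (T (pi1 C X Y))) (snd (T (pi2 C X Y)))) = tns L (Fo M ?Q) (lam ?Q)
    \<and> Cd L (btpl L (snd (T (pi1 C X Y))) (snd (T (pi2 C X Y)))) = bp L (lam X) (lam Y) \<and>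
    Cp L (btpl L (snd (T (pi1 C X Y))) (snd (T (pi2 C X Y)))) (bq2 L (lam X) (lam Y)) = snd (T (pi2 C X Y))"
    using btpl[OF v(1) v(4)] v by simp
  have pf: "phi C L T X Y = (idm C (prd C X Y), btpl L (snd (T (pi1 C X Y))) (snd (T (pi2 C X Y))))"
    unfolding phi_def ls_pair_def f1 id by simp
  have "(idm C ?Q, btpl L (snd (T (pi1 C X Y))) (snd (T (pi2 C X Y)))) \<in> ls_hom C L M (?Q, lam ?Q) (?Q, bp L (lam X) (lam Y))"
    unfolding ls_hom_iff using b o by (simp add: ty3)
  then show ?thesis using pf b by simp
qed

lemma inv_props: "X \<in> Ob C \<Longrightarrow> Y \<in> Ob C \<Longrightarrow>
  (let ps = ls_inv C L M (prd C X Y, lam (prd C X Y)) (prd C X Y, bp L (lam X) (lam Y)) (phi C L T X Y) in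
   ps \<in> ls_hom C L M (prd C X Y, bp L (lam X) (lam Y)) (prd C X Y, lam (prd C X Y)) \<and>
   ls_comp C L M (lam (prd C X Y)) (phi C L T X Y) ps = ls_id C L M (prd C X Y) (lam (prd C X Y)) \<and>
   ls_comp C L M (bp L (lam X) (lam Y)) ps (phi C L T X Y) = ls_id C L M (prd C X Y) (bp L (lam X) (lam Y)) \<and>
   fst ps = idm C (prd C X Y))"
proof -
  assume o: "X \<in> Ob C" "Y \<in> Ob C"
  let ?Q = "prd C X Y"
  obtain ps where p: "ps \<in> ls_hom C L M (?Q, bp L (lam X) (lam Y)) (?Q, lam ?Q)"
    "ls_comp C L M (lam ?Q) (phi C L T X Y) ps = ls_id C L M ?Q (lam ?Q)"
    "ls_comp C L M (bp L (lam X) (lam Y)) ps (phi C L T X Y) = ls_id C L M ?Q (bp L (lam X) (lam Y))"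
    using phi_iso[OF o] by blast
  have ph: "phi C L T X Y \<in> ls_hom C L M (?Q, lam ?Q) (?Q, bp L (lam X) (lam Y))"
    "fst (phi C L T X Y) = idm C ?Q" using phi_form[OF o] by (blast, simp)
  have e: "ls_inv C L M (?Q, lam ?Q) (?Q, bp L (lam X) (lam Y)) (phi C L T X Y) = ps"
    by (rule ls_inv_eq[OF ph(1) p(1) _ _ p(2) p(3)]) (use o in \<open>simp_all add: ty3\<close>)
  have "fst ps = idm C ?Q"
  proof -
    have "fst (ls_comp C L M (lam ?Q) (phi C L T X Y) ps) = idm C ?Q" using p(2) by (simp add: ls_id_def)
    then show ?thesis using p(1) ph(2) o by (cases ps) (simp add: ls_comp_def ls_hom_iff C_idl ty3)
  qed
  then show ?thesis using p e by simp
qed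

lemma i2_props: "X \<in> Ob C \<Longrightarrow> Y \<in> Ob C \<Longrightarrow>
  i2 C L M T lam X Y \<in> ls_hom C L M (prd C X Y, lam Y) (prd C X Y, lam (prd C X Y)) \<and>
  fst (i2 C L M T lam X Y) = idm C (prd C X Y)"
proof -
  assume o: "X \<in> Ob C" "Y \<in> Ob C"
  let ?Q = "prd C X Y"
  let ?ps = "ls_inv C L M (?Q, lam ?Q) (?Q, bp L (lam X) (lam Y)) (phi C L T X Y)"
  have p: "?ps \<in> ls_hom C L M (?Q, bp L (lam X) (lam Y)) (?Q, lam ?Q)" "fst ?ps = idm C ?Q"
    using inv_props[OF o] by (simp_all add: Let_def)
  have j: "ls_inj2 C L M ?Q (lam X) (lam Y) \<in> ls_hom C L M (?Q, lam Y) (?Q, bp L (lam X) (lam Y))"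
    using o by (simp add: ls_inj2_def ls_hom_iff ty3 tns_unit)
  show ?thesis unfolding i2_def
    using ls_comp_hom[OF j p(1)] o p(2) by (simp add: ls_comp_def ls_inj2_def C_idl ty3)
qed

lemma T_pi2: "X \<in> Ob C \<Longrightarrow> Y \<in> Ob C \<Longrightarrow>
  T (pi2 C X Y) = ls_comp C L M (lam (prd C X Y)) (phi C L T X Y) (pi2 C X Y, tnsm L (wkn C L M (prd C X Y)) (bq2 L (lam X) (lam Y)))"
proof -
  assume o: "X \<in> Ob C" "Y \<in> Ob C"
  let ?Q = "prd C X Y"
  let ?b = "btpl L (snd (T (pi1 C X Y))) (snd (T (pi2 C X Y)))"
  have pf: "phi C L T X Y = (idm C ?Q, ?b)" "phi C L T X Y \<in> ls_hom C L M (?Q, lam ?Q) (?Q, bp L (lam X) (lam Y))"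
    "Cp L ?b (bq2 L (lam X) (lam Y)) = snd (T (pi2 C X Y))" using phi_form[OF o] by blast+
  have bt: "?b \<in> Ar L" "Dm L ?b = tns L (Fo M ?Q) (lam ?Q)" "Cd L ?b = bp L (lam X) (lam Y)"
    using pf(2) unfolding pf(1) ls_hom_iff by simp_all
  have t2: "T (pi2 C X Y) \<in> ls_hom C L M (?Q, lam ?Q) (Y, lam Y)" using T_hom[of "pi2 C X Y"] o by (simp add: ty3)
  have v: "snd (T (pi2 C X Y)) \<in> Ar L" "Dm L (snd (T (pi2 C X Y))) = tns L (Fo M ?Q) (lam ?Q)"
    using t2 by (auto simp: ls_hom_def hom_def)
  have "Cp L (tnsm L (Fm M (idm C ?Q)) ?b) (tnsm L (wkn C L M ?Q) (bq2 L (lam X) (lam Y)))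
     = tnsm L (wkn C L M ?Q) (snd (T (pi2 C X Y)))"
    using o bt pf(3) by (simp add: Fm_id interchange[symmetric] ty3 L_idl)
  then have "Cp L (Cp L (tnsm L (cpy C L M ?Q) (idm L (lam ?Q))) (tnsm L (Fm M (idm C ?Q)) ?b)) (tnsm L (wkn C L M ?Q) (bq2 L (lam X) (lam Y)))
     = snd (T (pi2 C X Y))"
    using o bt v by (simp add: L_assoc ty3 Fm_id H1 tns_assoc)
  moreover have "T (pi2 C X Y) = (pi2 C X Y, snd (T (pi2 C X Y)))" using o T_fst[of "pi2 C X Y"] by (simp add: ty3 prod_eq_iff)
  ultimately show ?thesis unfolding pf(1) ls_comp_def using o by (simp add: C_idl ty3)
qed

end


context gd begin

lemma i2_T_pi2: "X \<in> Ob C \<Longrightarrow> Y \<in> Ob C \<Longrightarrow>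
  ls_comp C L M (lam Y) (i2 C L M T lam X Y) (T (pi2 C X Y)) = (pi2 C X Y, tnsm L (wkn C L M (prd C X Y)) (idm L (lam Y)))"
proof -
  assume o: "X \<in> Ob C" "Y \<in> Ob C"
  let ?Q = "prd C X Y" and ?bp = "bp L (lam X) (lam Y)"
  let ?ps = "ls_inv C L M (?Q, lam ?Q) (?Q, ?bp) (phi C L T X Y)"
  let ?io = "ls_inj2 C L M ?Q (lam X) (lam Y)"
  let ?pr = "(pi2 C X Y, tnsm L (wkn C L M ?Q) (bq2 L (lam X) (lam Y)))"
  have ob: "lam X \<in> Ob L" "lam Y \<in> Ob L" "lam ?Q \<in> Ob L" "?bp \<in> Ob L" "?Q \<in> Ob C" using o by (simp_all add: ty3)
  have p: "?ps \<in> ls_hom C L M (?Q, ?bp) (?Q, lam ?Q)"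
    "ls_comp C L M ?bp ?ps (phi C L T X Y) = ls_id C L M ?Q ?bp"
    using inv_props[OF o] by (simp_all add: Let_def)
  have ph: "phi C L T X Y \<in> ls_hom C L M (?Q, lam ?Q) (?Q, ?bp)" using phi_form[OF o] by blast
  have j: "?io \<in> ls_hom C L M (?Q, lam Y) (?Q, ?bp)"
    using o by (simp add: ls_inj2_def ls_hom_iff ty3 tns_unit)
  have pr: "?pr \<in> ls_hom C L M (?Q, ?bp) (Y, lam Y)"
    using o by (simp add: ls_hom_iff ty3 tns_unit)
  have "ls_comp C L M ?bp ?ps (ls_comp C L M (lam ?Q) (phi C L T X Y) ?pr)
      = ls_comp C L M ?bp (ls_comp C L M ?bp ?ps (phi C L T X Y)) ?pr"
    using ls_assoc[OF p(1) ph pr] ob by simp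
  also have "\<dots> = ?pr" unfolding p(2) using ls_idl[OF pr] ob by simp
  finally have e1: "ls_comp C L M ?bp ?ps (T (pi2 C X Y)) = ?pr" using T_pi2[OF o] by simp
  have tp: "T (pi2 C X Y) \<in> ls_hom C L M (?Q, lam ?Q) (Y, lam Y)" using T_hom[of "pi2 C X Y"] o by (simp add: ty3)
  have "ls_comp C L M (lam Y) (i2 C L M T lam X Y) (T (pi2 C X Y)) = ls_comp C L M (lam Y) ?io (ls_comp C L M ?bp ?ps (T (pi2 C X Y)))"
    unfolding i2_def using ls_assoc[OF j p(1) tp] ob by simp
  also have "\<dots> = ls_comp C L M (lam Y) ?io ?pr" using e1 by simp
  also have "\<dots> = (pi2 C X Y, tnsm L (wkn C L M ?Q) (idm L (lam Y)))"
  proof -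
    let ?w = "wkn C L M ?Q"
    have a1: "Cp L (tnsm L ?w (binj2 L (lam X) (lam Y))) (bq2 L (lam X) (lam Y)) = tnsm L ?w (idm L (lam Y))"
    proof -
      have "Cp L (tnsm L ?w (binj2 L (lam X) (lam Y))) (bq2 L (lam X) (lam Y))
          = Cp L (tnsm L ?w (binj2 L (lam X) (lam Y))) (tnsm L (idm L (tunit L)) (bq2 L (lam X) (lam Y)))"
        using ob by (simp add: tnsm_unit ty3)
      also have "\<dots> = tnsm L (Cp L ?w (idm L (tunit L))) (Cp L (binj2 L (lam X) (lam Y)) (bq2 L (lam X) (lam Y)))"
        using ob by (simp add: interchange ty3)
      also have "\<dots> = tnsm L ?w (idm L (lam Y))" using ob by (simp add: binj2 L_idr ty3)
      finally show ?thesis .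
    qed
    have a2: "Cp L (tnsm L (Fm M (idm C ?Q)) (tnsm L ?w (binj2 L (lam X) (lam Y)))) (tnsm L ?w (bq2 L (lam X) (lam Y)))
       = tnsm L ?w (tnsm L ?w (idm L (lam Y)))"
      using ob a1[symmetric] by (simp add: Fm_id interchange[symmetric] ty3 L_idl tns_unit)
    have "Cp L (Cp L (tnsm L (cpy C L M ?Q) (idm L (lam Y))) (tnsm L (Fm M (idm C ?Q)) (tnsm L ?w (binj2 L (lam X) (lam Y))))) (tnsm L ?w (bq2 L (lam X) (lam Y)))
       = tnsm L ?w (idm L (lam Y))"
      using ob by (simp add: L_assoc ty3 tns_assoc tns_unit a2 H1)
    then show ?thesis unfolding ls_comp_def ls_inj2_def using ob o by (simp add: C_idl ty3)
  qed
  finally show ?thesis .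
qed

lemma compr_ty: "(f,u) \<in> ls_hom C L M (X,A) (Y,B) \<Longrightarrow> A \<in> Ob L \<Longrightarrow>
   compr C L M A (f,u) \<in> Ar C \<and> Dm C (compr C L M A (f,u)) = prd C X (Uo M A) \<and>
   Cd C (compr C L M A (f,u)) = prd C Y (Uo M B)"
  unfolding compr_def ls_hom_iff by (auto simp: ty3)

lemma main:
  assumes o: "X \<in> Ob C" "Y \<in> Ob C" "A \<in> Ob L" "B \<in> Ob L"
    and fu: "(f, u) \<in> ls_hom C L M (X, A) (Y, B)"
    and g: "g = Cp C (compr C L M A (f, u)) (pi2 C Y (Uo M B))"
  shows "D2 C L M T lam X (Uo M A) g = reindex C L M (pi1 C X (Uo M A)) A (idm C X, u)"
proof -
  let ?P = "prd C X (Uo M A)" and ?Q = "prd C Y (Uo M B)" and ?cm = "compr C L M A (f, u)"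
  let ?sW = "Cp L (tnsm L (Fm M (pi1 C X (Uo M A))) (idm L A)) u"
  have t: "f \<in> Ar C" "Dm C f = X" "Cd C f = Y" "u \<in> Ar L" "Dm L u = tns L (Fo M X) A" "Cd L u = B"
    using fu unfolding ls_hom_iff by auto
  have ob: "Uo M A \<in> Ob C" "Uo M B \<in> Ob C" "?P \<in> Ob C" "?Q \<in> Ob C" "lam ?P \<in> Ob L" "lam ?Q \<in> Ob L"
    "lam (Uo M A) = A" "lam (Uo M B) = B"
    using o by (simp_all add: ty3 lam_U)
  have cm: "?cm \<in> Ar C" "Dm C ?cm = ?P" "Cd C ?cm = ?Q" using compr_ty[OF fu o(3)] by simp_all
  have W: "Wk C L M A (f,u) = (?cm, ?sW)" by (simp add: Wk_def t)
  have Wh: "Wk C L M A (f,u) \<in> ls_hom C L M (?P, A) (?Q, B)"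
    unfolding W ls_hom_iff using cm t o ob by (simp add: ty3)
  have iX: "i2 C L M T lam X (Uo M A) \<in> ls_hom C L M (?P, A) (?P, lam ?P)" "fst (i2 C L M T lam X (Uo M A)) = idm C ?P"
    using i2_props[OF o(1) ob(1)] ob by simp_all
  have iY: "i2 C L M T lam Y (Uo M B) \<in> ls_hom C L M (?Q, B) (?Q, lam ?Q)"
    using i2_props[OF o(2) ob(2)] ob by simp_all
  have Tcm: "T ?cm \<in> ls_hom C L M (?P, lam ?P) (?Q, lam ?Q)" using T_hom[of ?cm] cm by simp
  have Tp: "T (pi2 C Y (Uo M B)) \<in> ls_hom C L M (?Q, lam ?Q) (Uo M B, B)"
    using T_hom[of "pi2 C Y (Uo M B)"] o ob by (simp add: ty3)
  have gA: "g \<in> Ar C" "Dm C g = ?P" using g cm o ob by (simp_all add: ty3)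
  have Tg: "T g = ls_comp C L M (lam ?P) (T ?cm) (T (pi2 C Y (Uo M B)))"
    using g cm o ob T_comp[of ?cm "pi2 C Y (Uo M B)"] by (simp add: ty3)
  have "ls_comp C L M A (i2 C L M T lam X (Uo M A)) (T g)
      = ls_comp C L M A (ls_comp C L M A (i2 C L M T lam X (Uo M A)) (T ?cm)) (T (pi2 C Y (Uo M B)))"
    unfolding Tg using ls_assoc[OF iX(1) Tcm Tp] o ob by simp
  also have "\<dots> = ls_comp C L M A (ls_comp C L M A (Wk C L M A (f,u)) (i2 C L M T lam Y (Uo M B))) (T (pi2 C Y (Uo M B)))"
    using t3[OF o fu] ob by simp
  also have "\<dots> = ls_comp C L M A (Wk C L M A (f,u)) (ls_comp C L M B (i2 C L M T lam Y (Uo M B)) (T (pi2 C Y (Uo M B))))"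
    using ls_assoc[OF Wh iY Tp] o ob by simp
  also have "\<dots> = ls_comp C L M A (Wk C L M A (f,u)) (pi2 C Y (Uo M B), tnsm L (wkn C L M ?Q) (idm L B))"
    using i2_T_pi2[OF o(2) ob(2)] ob by simp
  also have "\<dots> = (g, ?sW)"
  proof -
    have "Cp L (tnsm L (Fm M ?cm) ?sW) (tnsm L (wkn C L M ?Q) (idm L B)) = tnsm L (wkn C L M ?P) ?sW"
      using cm t o ob wkn_nat[of ?cm] by (simp add: interchange[symmetric] ty3 L_idr)
    then have "Cp L (Cp L (tnsm L (cpy C L M ?P) (idm L A)) (tnsm L (Fm M ?cm) ?sW)) (tnsm L (wkn C L M ?Q) (idm L B)) = ?sW"
      using cm t o ob by (simp add: L_assoc ty3 H1 tns_assoc)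
    then show ?thesis unfolding W ls_comp_def using g cm by simp
  qed
  finally have e: "ls_comp C L M A (i2 C L M T lam X (Uo M A)) (T g) = (g, ?sW)" .
  obtain a where ia: "i2 C L M T lam X (Uo M A) = (idm C ?P, a)" using iX(2) by (cases "i2 C L M T lam X (Uo M A)") auto
  have Tg2: "T g = (g, snd (T g))" using T_fst[OF gA(1)] by (simp add: prod_eq_iff)
  have "snd (ls_comp C L M A (i2 C L M T lam X (Uo M A)) (T g)) = ?sW" using e by simp
  then have s: "Cp L (Cp L (tnsm L (cpy C L M ?P) (idm L A)) (tnsm L (Fm M (idm C ?P)) a)) (snd (T g)) = ?sW"
    unfolding ia ls_comp_def using ob by (simp add: ty3)
  show ?thesis unfolding D2_def Dif_def ia reindex_def ls_comp_def using s ob gA o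
    by (simp add: C_idl ty3)
qed

end

theorem lemma4p17:
  assumes "is_gdsc C L M T lam"
    and "X \<in> Ob C" and "Y \<in> Ob C" and "A \<in> Ob L" and "B \<in> Ob L"
    and "(f, u) \<in> ls_hom C L M (X, A) (Y, B)"
    and "g = Cp C (compr C L M A (f, u)) (pi2 C Y (Uo M B))"
  shows "D2 C L M T lam X (Uo M A) g = reindex C L M (pi1 C X (Uo M A)) A (idm C X, u)"
proof -
  interpret gd C L M T lam by unfold_locales (rule assms(1))
  show ?thesis by (rule main[OF assms(2-7)])
qed

end
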